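(* Let $M \ge 1$, $\mathcal{Y} = \{1,\ldots,M\}$, $K \le M$, and let ${\bm V} \in \mathbb{R}^{M\times K}$, so that ${\bm L} = {\bm V}{\bm V}^\top$ is a positive semi-definite kernel of rank at most $K$ defining a determinantal point process (DPP) on $\mathcal{Y}$. Let $A \subseteq \mathcal{Y}$ and $\bar A = \mathcal{Y}\setminus A$. Then the conditional marginal probabilities $P_i = \Pr(i \in Y \mid A \subseteq Y)$, for all $i \in \bar A$, of the DPP conditioned on the event that all items of $A$ are observed (i.e. of the DPP on $\bar A$ with conditioned kernel ${\bm L}^A$) can be computed, given ${\bm V}$ and $A$, in $\mathcal{O}(K^3 + |A|^3 + K^2|A|^2 + |\bar A|K^2)$ time.
   Context: A determinantal point process on the finite ground set $\mathcal{Y}$ with positive semi-definite kernel ${\bm L}\in\mathbb{R}^{M\times M}$ is the probability distribution on random subsets $Y\subseteq\mathcal{Y}$ given by $\Pr(Y = S) = \det({\bm L}_S)/\det({\bm L}+{\bm I})$, where ${\bm L}_S = [{\bm L}_{ij}]_{i,j\in S}$ (with $\det$ of the empty matrix equal to $1$). For $A \subseteq \mathcal{Y}$ with $\Pr(A\subseteq Y)>0$, conditioning this DPP on the event $A \subseteq Y$ gives a distribution of $Y\setminus A$ that is again a DPP on $\bar A = \mathcal{Y}\setminus A$, with kernel ${\bm L}^A$; its marginal probabilities are $P_i = \Pr(i\in Y \mid A\subseteq Y)$ for $i \in \bar A$. Time is measured in arithmetic operations on real numbers. *)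

theory Defs
  imports "HOL-Analysis.Analysis"
begin

text \<open>Matrices are functions nat => nat => real; the principal submatrix L_S is
the restriction to S x S, and its determinant is given by the Leibniz formula
(the determinant of the empty matrix is 1).\<close>

definition det_on :: "nat set \<Rightarrow> (nat \<Rightarrow> nat \<Rightarrow> real) \<Rightarrow> real" where
  "det_on S L = (\<Sum>p | p permutes S. of_int (sign p) * (\<Prod>i\<in>S. L i (p i)))"

definition gram :: "nat \<Rightarrow> (nat \<Rightarrow> nat \<Rightarrow> real) \<Rightarrow> (nat \<Rightarrow> nat \<Rightarrow> real)" where
  "gram K V = (\<lambda>i j. \<Sum>k<K. V i k * V j k)"

definition dpp_prob :: "nat \<Rightarrow> (nat \<Rightarrow> nat \<Rightarrow> real) \<Rightarrow> nat set \<Rightarrow> real" where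
  "dpp_prob M L S = det_on S L / det_on {..<M} (\<lambda>i j. L i j + (if i = j then 1 else 0))"

definition dpp_event_prob :: "nat \<Rightarrow> (nat \<Rightarrow> nat \<Rightarrow> real) \<Rightarrow> (nat set \<Rightarrow> bool) \<Rightarrow> real" where
  "dpp_event_prob M L E = (\<Sum>S\<in>{S. S \<subseteq> {..<M} \<and> E S}. dpp_prob M L S)"

definition cond_marginal :: "nat \<Rightarrow> (nat \<Rightarrow> nat \<Rightarrow> real) \<Rightarrow> nat set \<Rightarrow> nat \<Rightarrow> real" where
  "cond_marginal M L A i =
     dpp_event_prob M L (\<lambda>S. A \<union> {i} \<subseteq> S) / dpp_event_prob M L (\<lambda>S. A \<subseteq> S)"

text \<open>Arithmetic instructions
(+, -, *, /) and sign tests cost one operation each; loading a rational constant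
and reading the outputs are free.  The program
halts with a map telling, for each item i, which register holds the output.\<close>

datatype aop = Add | Sub | Mul | Div

datatype prog =
    Halt "nat \<Rightarrow> nat"
  | Arith aop nat nat nat prog   \<comment> \<open>Arith op dst src1 src2 next\<close>
  | Const rat nat prog           \<comment> \<open>Const q dst next\<close>
  | Branch nat prog prog         \<comment> \<open>if 0 < reg r then first else second\<close>

fun apply_aop :: "aop \<Rightarrow> real \<Rightarrow> real \<Rightarrow> real option" where
  "apply_aop Add x y = Some (x + y)"
| "apply_aop Sub x y = Some (x - y)"
| "apply_aop Mul x y = Some (x * y)"
| "apply_aop Div x y = (if y = 0 then None else Some (x / y))"

fun run :: "prog \<Rightarrow> (nat \<Rightarrow> real) \<Rightarrow> ((nat \<Rightarrow> real) \<times> nat) option" where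
  "run (Halt out) r = Some (\<lambda>i. r (out i), 0)"
| "run (Arith f d a b p) r =
     (case apply_aop f (r a) (r b) of
        None \<Rightarrow> None
      | Some v \<Rightarrow> (case run p (r(d := v)) of
                    None \<Rightarrow> None
                  | Some (o', c) \<Rightarrow> Some (o', Suc c)))"
| "run (Const q d p) r = run p (r(d := of_rat q))"
| "run (Branch t p1 p2) r =
     (case run (if 0 < r t then p1 else p2) r of
        None \<Rightarrow> None
      | Some (o', c) \<Rightarrow> Some (o', Suc c))"

definition input_regs :: "nat \<Rightarrow> nat \<Rightarrow> (nat \<Rightarrow> nat \<Rightarrow> real) \<Rightarrow> nat \<Rightarrow> real" where
  "input_regs M K V n = (if n < M * K then V (n div K) (n mod K) else 0)"

end

theory Submission
  imports Defs
begin


lemma det_on_empty: "det_on {} L = 1" unfolding det_on_def by simp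

lemma det_on_single: "det_on {a} L = L a a"
  unfolding det_on_def by (simp add: permutes_sing)

lemma det_on_cong:
  assumes "\<And>i j. i \<in> S \<Longrightarrow> j \<in> S \<Longrightarrow> L i j = L' i j"
  shows "det_on S L = det_on S L'"
  unfolding det_on_def
proof (rule sum.cong[OF refl])
  fix p assume "p \<in> {p. p permutes S}"
  hence p: "p permutes S" by simp
  show "of_int (sign p) * (\<Prod>i\<in>S. L i (p i)) = of_int (sign p) * (\<Prod>i\<in>S. L' i (p i))"
    using assms permutes_in_image[OF p] by (metis (no_types, lifting) prod.cong)
qed

lemma det_on_transpose:
  assumes fin: "finite S"
  shows "det_on S (\<lambda>i j. L j i) = det_on S L"
proof -
  have "det_on S (\<lambda>i j. L j i) = (\<Sum>p | p permutes S. of_int (sign (inv p)) * (\<Prod>i\<in>S. L (inv p i) i))"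
    unfolding det_on_def by (rule sum_permutations_inverse)
  also have "\<dots> = (\<Sum>p | p permutes S. of_int (sign p) * (\<Prod>i\<in>S. L i (p i)))"
  proof (rule sum.cong[OF refl])
    fix p assume "p \<in> {p. p permutes S}"
    hence p: "p permutes S" by simp
    have s: "sign (inv p) = sign p"
      using p fin by (metis permutation_permutes sign_inverse)
    have "(\<Prod>i\<in>S. L (inv p i) i) = (\<Prod>i\<in>S. L (inv p (p i)) (p i))"
      using prod.permute[OF p, of "\<lambda>i. L (inv p i) i"] by (simp add: o_def)
    also have "\<dots> = (\<Prod>i\<in>S. L i (p i))" using permutes_inverses[OF p] by simp
    finally show "of_int (sign (inv p)) * (\<Prod>i\<in>S. L (inv p i) i) = of_int (sign p) * (\<Prod>i\<in>S. L i (p i))"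
      using s by simp
  qed
  finally show ?thesis unfolding det_on_def .
qed

lemma det_on_row_linear:
  assumes fin: "finite S" and a: "a \<in> S"
  shows "det_on S (\<lambda>i j. if i = a then c1 * x j + c2 * y j else L i j)
       = c1 * det_on S (\<lambda>i j. if i = a then x j else L i j) + c2 * det_on S (\<lambda>i j. if i = a then y j else L i j)"
proof -
  have split: "\<And>F. (\<Prod>i\<in>S. F i) = F a * (\<Prod>i\<in>S-{a}. F i)"
    using fin a by (simp add: prod.remove)
  have eq: "\<And>p. (\<Prod>i\<in>S-{a}. (if i = a then c1 * x (p i) + c2 * y (p i) else L i (p i)))
         = (\<Prod>i\<in>S-{a}. L i (p i))" "\<And>p. (\<Prod>i\<in>S-{a}. (if i = a then x (p i) else L i (p i)))
         = (\<Prod>i\<in>S-{a}. L i (p i))" "\<And>p. (\<Prod>i\<in>S-{a}. (if i = a then y (p i) else L i (p i)))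
         = (\<Prod>i\<in>S-{a}. L i (p i))" by (auto intro!: prod.cong)
  show ?thesis
    unfolding det_on_def
    apply (subst (1 2 3) split)
    apply (simp only: eq if_True)
    apply (simp add: sum_distrib_left sum.distrib[symmetric] algebra_simps)
    done
qed

lemma det_on_swap_rows:
  assumes fin: "finite S" and a: "a \<in> S" and b: "b \<in> S" and ab: "a \<noteq> b"
  shows "det_on S (\<lambda>i j. L (Transposition.transpose a b i) j) = - det_on S L"
proof -
  let ?t = "Transposition.transpose a b"
  have t: "?t permutes S" using a b by (rule permutes_swap_id)
  have st: "sign ?t = -1" using ab by (simp add: sign_swap_id)
  have pt: "permutation ?t" using t fin permutation_permutes by blast
  define f where "f p = of_int (sign (p \<circ> ?t)) * (\<Prod>i\<in>S. L i (p i))" for p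
  have "det_on S (\<lambda>i j. L (?t i) j) = (\<Sum>p | p permutes S. f (p \<circ> ?t))"
    unfolding det_on_def
  proof (rule sum.cong[OF refl])
    fix p assume "p \<in> {p. p permutes S}"
    hence p: "p permutes S" by simp
    have "(\<Prod>i\<in>S. L (?t i) (p i)) = (\<Prod>i\<in>S. L (?t (?t i)) (p (?t i)))"
      using prod.permute[OF t, of "\<lambda>i. L (?t i) (p i)"] by (simp add: o_def)
    also have "\<dots> = (\<Prod>i\<in>S. L i ((p \<circ> ?t) i))" by simp
    finally show "of_int (sign p) * (\<Prod>i\<in>S. L (?t i) (p i)) = f (p \<circ> ?t)"
      unfolding f_def by (simp add: o_assoc[symmetric])
  qed
  also have "\<dots> = (\<Sum>p | p permutes S. f p)"
    by (rule sum_permutations_compose_right[OF t, symmetric])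
  also have "\<dots> = - det_on S L"
    unfolding det_on_def f_def sum_negf[symmetric]
  proof (rule sum.cong[OF refl])
    fix p assume "p \<in> {p. p permutes S}"
    hence p: "p permutes S" by simp
    have "permutation p" using p fin permutation_permutes by blast
    hence "sign (p \<circ> ?t) = - sign p" using pt st by (simp add: sign_compose)
    thus "of_int (sign (p \<circ> ?t)) * (\<Prod>i\<in>S. L i (p i)) = - (of_int (sign p) * (\<Prod>i\<in>S. L i (p i)))"
      by simp
  qed
  finally show ?thesis .
qed

lemma det_on_equal_rows:
  assumes fin: "finite S" and a: "a \<in> S" and b: "b \<in> S" and ab: "a \<noteq> b"
    and eq: "\<And>j. L a j = L b j"
  shows "det_on S L = 0"
proof -
  have "(\<lambda>i j. L (Transposition.transpose a b i) j) = L"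
    using eq by (intro ext) (simp add: Transposition.transpose_def)
  with det_on_swap_rows[OF fin a b ab, of L] show ?thesis by simp
qed

lemma det_on_row_add:
  assumes fin: "finite S" and a: "a \<in> S" and b: "b \<in> S" and ab: "a \<noteq> b"
  shows "det_on S (\<lambda>i j. if i = a then L a j + t * L b j else L i j) = det_on S L"
proof -
  have "det_on S (\<lambda>i j. if i = a then L a j + t * L b j else L i j)
     = det_on S (\<lambda>i j. if i = a then 1 * L a j + t * L b j else L i j)" by (intro arg_cong[where f="det_on S"] ext) simp
  also have "\<dots> = 1 * det_on S (\<lambda>i j. if i = a then L a j else L i j) + t * det_on S (\<lambda>i j. if i = a then L b j else L i j)"
    by (rule det_on_row_linear[OF fin a])
  also have "det_on S (\<lambda>i j. if i = a then L b j else L i j) = 0"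
    by (rule det_on_equal_rows[OF fin a b ab]) (use ab in auto)
  also have "(\<lambda>i j. if i = a then L a j else L i j) = L" by (intro ext) simp
  finally show ?thesis by simp
qed

lemma det_on_row_scale:
  assumes fin: "finite S" and a: "a \<in> S"
  shows "det_on S (\<lambda>i j. if i = a then t * L i j else L i j) = t * det_on S L"
proof -
  have "det_on S (\<lambda>i j. if i = a then t * L a j + 0 * L a j else L i j)
     = t * det_on S (\<lambda>i j. if i = a then L a j else L i j) + 0 * det_on S (\<lambda>i j. if i = a then L a j else L i j)"
    by (rule det_on_row_linear[OF fin a])
  moreover have "(\<lambda>i j. if i = a then L a j else L i j) = L" by (intro ext) simp
  moreover have "(\<lambda>i j. if i = a then t * L a j + 0 * L a j else L i j) = (\<lambda>i j. if i = a then t * L i j else L i j)"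
    by (auto simp: fun_eq_iff)
  ultimately show ?thesis by simp
qed

lemma permutes_minus_iff: "p permutes (S - {a}) \<longleftrightarrow> p permutes S \<and> p a = a"
  unfolding permutes_def by blast

lemma det_on_row_unit:
  assumes fin: "finite S" and a: "a \<in> S"
    and row: "\<And>j. j \<in> S \<Longrightarrow> L a j = (if j = a then t else 0)"
  shows "det_on S L = t * det_on (S - {a}) L"
proof -
  have split: "(\<Prod>i\<in>S. L i (p i)) = L a (p a) * (\<Prod>i\<in>S-{a}. L i (p i))" for p
    using fin a by (simp add: prod.remove)
  have fs: "finite {p. p permutes S}" using fin by (rule finite_permutations)
  have seq: "{p. p permutes S \<and> p a = a} = {p. p permutes (S - {a})}"
    by (simp only: permutes_minus_iff)
  have "det_on S L = (\<Sum>p \<in> {p. p permutes S \<and> p a = a}. of_int (sign p) * (\<Prod>i\<in>S. L i (p i)))"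
    unfolding det_on_def
  proof (rule sum.mono_neutral_right[OF fs])
    show "{p. p permutes S \<and> p a = a} \<subseteq> {p. p permutes S}" by blast
    show "\<forall>p\<in>{p. p permutes S} - {p. p permutes S \<and> p a = a}. of_int (sign p) * (\<Prod>i\<in>S. L i (p i)) = 0"
    proof
      fix p assume "p \<in> {p. p permutes S} - {p. p permutes S \<and> p a = a}"
      hence p: "p permutes S" and pa: "p a \<noteq> a" by auto
      have "p a \<in> S" using permutes_in_image[OF p] a by simp
      hence "L a (p a) = 0" using row pa by simp
      thus "of_int (sign p) * (\<Prod>i\<in>S. L i (p i)) = 0" unfolding split by simp
    qed
  qed
  also have "\<dots> = (\<Sum>p \<in> {p. p permutes (S - {a})}. t * (of_int (sign p) * (\<Prod>i\<in>S-{a}. L i (p i))))"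
    unfolding seq
  proof (rule sum.cong[OF refl])
    fix p assume "p \<in> {p. p permutes S - {a}}"
    hence "p a = a" by (simp add: permutes_minus_iff)
    hence "L a (p a) = t" using row[OF a] by simp
    thus "of_int (sign p) * (\<Prod>i\<in>S. L i (p i)) = t * (of_int (sign p) * (\<Prod>i\<in>S - {a}. L i (p i)))"
      unfolding split by simp
  qed
  also have "\<dots> = t * det_on (S - {a}) L" unfolding det_on_def by (simp add: sum_distrib_left)
  finally show ?thesis .
qed

lemma det_on_col_add:
  assumes fin: "finite S" and a: "a \<in> S" and b: "b \<in> S" and ab: "a \<noteq> b"
  shows "det_on S (\<lambda>i j. if j = a then L i a + t * L i b else L i j) = det_on S L"
proof -
  have "det_on S (\<lambda>i j. if j = a then L i a + t * L i b else L i j)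
      = det_on S (\<lambda>i j. if i = a then L j a + t * L j b else L j i)"
    by (rule det_on_transpose[OF fin, of "\<lambda>i j. if i = a then L j a + t * L j b else L j i"])
  also have "\<dots> = det_on S (\<lambda>i j. L j i)"
    using det_on_row_add[OF fin a b ab, of "\<lambda>i j. L j i" t] by simp
  also have "\<dots> = det_on S L" by (rule det_on_transpose[OF fin])
  finally show ?thesis .
qed

lemma det_on_col_scale:
  assumes fin: "finite S" and a: "a \<in> S"
  shows "det_on S (\<lambda>i j. if j = a then t * L i j else L i j) = t * det_on S L"
proof -
  have "det_on S (\<lambda>i j. if j = a then t * L i j else L i j)
      = det_on S (\<lambda>i j. if i = a then t * L j i else L j i)"
    by (rule det_on_transpose[OF fin, of "\<lambda>i j. if i = a then t * L j i else L j i"])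
  also have "\<dots> = t * det_on S (\<lambda>i j. L j i)"
    using det_on_row_scale[OF fin a, of t "\<lambda>i j. L j i"] by simp
  also have "\<dots> = t * det_on S L" using det_on_transpose[OF fin, of L] by simp
  finally show ?thesis .
qed



lemma det_on_col_ops:
  assumes fin: "finite S" and a: "a \<in> S" and X: "finite X" "a \<notin> X"
  shows "det_on S (\<lambda>r s. if s \<in> X then L r s + c s * L r a else L r s) = det_on S L"
  using X
proof (induction X rule: finite_induct)
  case empty
  then show ?case by simp
next
  case (insert x X)
  define L1 where "L1 = (\<lambda>r s. if s \<in> X then L r s + c s * L r a else L r s)"
  have xa: "x \<noteq> a" "a \<notin> X" using insert by auto
  have eq: "(\<lambda>r s. if s \<in> insert x X then L r s + c s * L r a else L r s)
        = (\<lambda>r s. if s = x then L1 r x + c x * L1 r a else L1 r s)"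
    using insert xa unfolding L1_def by (intro ext) auto
  have "det_on S (\<lambda>r s. if s = x then L1 r x + c x * L1 r a else L1 r s) = det_on S L1"
  proof (cases "x \<in> S")
    case True
    then show ?thesis using det_on_col_add[OF fin True a xa(1)] by simp
  next
    case False
    then show ?thesis by (intro det_on_cong) auto
  qed
  then show ?case using eq insert xa unfolding L1_def by simp
qed

lemma det_on_pivot:
  assumes fin: "finite R" and a: "a \<notin> R" and d: "B a a \<noteq> 0"
  shows "det_on (insert a R) B = B a a * det_on R (\<lambda>r s. B r s - B r a * B a s / B a a)"
proof -
  let ?S = "insert a R"
  define B1 where "B1 = (\<lambda>r s. if s \<in> R then B r s + (- B a s / B a a) * B r a else B r s)"
  have "det_on ?S B1 = det_on ?S B"
    unfolding B1_def by (rule det_on_col_ops) (use fin a in auto)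
  moreover have "det_on ?S B1 = B a a * det_on (?S - {a}) B1"
  proof (rule det_on_row_unit)
    show "finite ?S" using fin by simp
    show "a \<in> ?S" by simp
    fix j assume "j \<in> ?S"
    then show "B1 a j = (if j = a then B a a else 0)"
      unfolding B1_def using a d by auto
  qed
  moreover have "?S - {a} = R" using a by auto
  moreover have "det_on R B1 = det_on R (\<lambda>r s. B r s - B r a * B a s / B a a)"
    unfolding B1_def by (rule det_on_cong) (simp add: algebra_simps)
  ultimately show ?thesis by simp
qed

lemma det_on_rank1_in:
  assumes fin: "finite S" and j: "j \<in> S" and g: "1 + B j j \<noteq> 0"
  shows "det_on S B = (1 + B j j) * det_on S (\<lambda>r s. B r s - B r j * B j s / (1 + B j j))"
proof -
  define g where "g = 1 + B j j"
  define B' where "B' = (\<lambda>r s. B r s - B r j * B j s / g)"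
  define B2 where "B2 = (\<lambda>r s. if s = j then g * B' r s else B' r s)"
  have g0: "g \<noteq> 0" using g g_def by simp
  have "det_on S B2 = g * det_on S B'" unfolding B2_def by (rule det_on_col_scale[OF fin j])
  moreover have "det_on S (\<lambda>r s. if s \<in> S - {j} then B2 r s + (B j s / g) * B2 r j else B2 r s) = det_on S B2"
    by (rule det_on_col_ops) (use fin j in auto)
  moreover have "det_on S (\<lambda>r s. if s \<in> S - {j} then B2 r s + (B j s / g) * B2 r j else B2 r s) = det_on S B"
  proof (rule det_on_cong)
    fix r s assume "r \<in> S" "s \<in> S"
    have bj: "B' r j = B r j / g" unfolding B'_def g_def using g0 g_def
      by (simp add: field_simps)
    show "(if s \<in> S - {j} then B2 r s + B j s / g * B2 r j else B2 r s) = B r s"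
    proof (cases "s = j")
      case True
      then show ?thesis unfolding B2_def using g0 bj by simp
    next
      case False
      then have "(if s \<in> S - {j} then B2 r s + B j s / g * B2 r j else B2 r s)
          = B' r s + B j s / g * (g * (B r j / g))" unfolding B2_def using \<open>s \<in> S\<close> bj by simp
      also have "\<dots> = B' r s + B j s * B r j / g" using g0 by simp
      also have "\<dots> = B r s" unfolding B'_def by (simp add: algebra_simps)
      finally show ?thesis .
    qed
  qed
  ultimately show ?thesis unfolding g_def B'_def by simp
qed

lemma det_on_rank1_out:
  assumes fin: "finite R" and j: "j \<notin> R" and g: "1 + B j j \<noteq> 0"
  shows "det_on R B + det_on (insert j R) B = (1 + B j j) * det_on R (\<lambda>r s. B r s - B r j * B j s / (1 + B j j))"
proof -
  let ?S = "insert j R"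
  define Bp where "Bp = (\<lambda>r s. if r = j then 1 * B j s + 1 * (if s = j then 1 else 0) else B r s)"
  have finS: "finite ?S" using fin by simp
  have "det_on ?S Bp = 1 * det_on ?S (\<lambda>r s. if r = j then B j s else B r s)
        + 1 * det_on ?S (\<lambda>r s. if r = j then (if s = j then 1 else 0) else B r s)"
    unfolding Bp_def by (rule det_on_row_linear[OF finS]) simp
  moreover have "(\<lambda>r s. if r = j then B j s else B r s) = B" by (intro ext) simp
  moreover have "det_on ?S (\<lambda>r s. if r = j then (if s = j then 1 else 0) else B r s)
       = 1 * det_on (?S - {j}) (\<lambda>r s. if r = j then (if s = j then 1 else 0) else B r s)"
    by (rule det_on_row_unit[OF finS]) auto
  moreover have "?S - {j} = R" using j by auto
  moreover have "det_on R (\<lambda>r s. if r = j then (if s = j then 1 else 0) else B r s) = det_on R B"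
    by (rule det_on_cong) (use j in auto)
  moreover have "det_on ?S Bp = Bp j j * det_on R (\<lambda>r s. Bp r s - Bp r j * Bp j s / Bp j j)"
    by (rule det_on_pivot[OF fin j]) (use g in \<open>simp add: Bp_def algebra_simps\<close>)
  moreover have "Bp j j = 1 + B j j" unfolding Bp_def by simp
  moreover have "det_on R (\<lambda>r s. Bp r s - Bp r j * Bp j s / Bp j j) = det_on R (\<lambda>r s. B r s - B r j * B j s / (1 + B j j))"
    by (rule det_on_cong) (use j in \<open>auto simp: Bp_def algebra_simps\<close>)
  ultimately show ?thesis by (simp add: algebra_simps)
qed



definition Zs :: "(nat \<Rightarrow> nat \<Rightarrow> real) \<Rightarrow> nat set \<Rightarrow> nat set \<Rightarrow> real" where
  "Zs L E F = (\<Sum>S\<in>{S. E \<subseteq> S \<and> S \<subseteq> E \<union> F}. det_on S L)"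

definition bform :: "nat \<Rightarrow> (nat \<Rightarrow> nat \<Rightarrow> real) \<Rightarrow> (nat \<Rightarrow> real) \<Rightarrow> (nat \<Rightarrow> real) \<Rightarrow> real" where
  "bform K Q x y = (\<Sum>a<K. \<Sum>b<K. x a * Q a b * y b)"

definition kmat :: "nat \<Rightarrow> (nat \<Rightarrow> nat \<Rightarrow> real) \<Rightarrow> (nat \<Rightarrow> nat \<Rightarrow> real) \<Rightarrow> nat \<Rightarrow> nat \<Rightarrow> real" where
  "kmat K Q V = (\<lambda>r s. bform K Q (V r) (V s))"

definition symQ :: "nat \<Rightarrow> (nat \<Rightarrow> nat \<Rightarrow> real) \<Rightarrow> bool" where
  "symQ K Q \<longleftrightarrow> (\<forall>a<K. \<forall>b<K. Q a b = Q b a)"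

definition psdQ :: "nat \<Rightarrow> (nat \<Rightarrow> nat \<Rightarrow> real) \<Rightarrow> bool" where
  "psdQ K Q \<longleftrightarrow> (\<forall>x. 0 \<le> bform K Q x x)"

definition upd :: "nat \<Rightarrow> bool \<Rightarrow> (nat \<Rightarrow> nat \<Rightarrow> real) \<Rightarrow> (nat \<Rightarrow> real) \<Rightarrow> nat \<Rightarrow> nat \<Rightarrow> real" where
  "upd K fr Q v = (let w = (\<lambda>a. \<Sum>b<K. Q a b * v b);
                       g = (if fr then 1 else 0) + (\<Sum>a<K. v a * w a)
                   in (\<lambda>a b. Q a b - w a * w b / g))"

definition Inv :: "nat \<Rightarrow> (nat \<Rightarrow> nat \<Rightarrow> real) \<Rightarrow> nat set \<Rightarrow> nat set \<Rightarrow> real \<Rightarrow> (nat \<Rightarrow> nat \<Rightarrow> real) \<Rightarrow> bool" where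
  "Inv K V T F c Q \<longleftrightarrow> symQ K Q \<and> psdQ K Q \<and> finite T \<and> finite F \<and> T \<inter> F = {} \<and>
     (\<forall>R. finite R \<longrightarrow> R \<inter> T = {} \<longrightarrow> Zs (gram K V) (T \<union> R) (F - R) = c * det_on R (kmat K Q V))"

lemma Zs_split:
  assumes "finite E" "finite F" "j \<notin> E" "j \<notin> F"
  shows "Zs L E (insert j F) = Zs L E F + Zs L (insert j E) F"
proof -
  let ?A = "{S. E \<subseteq> S \<and> S \<subseteq> E \<union> F}"
  let ?B = "{S. insert j E \<subseteq> S \<and> S \<subseteq> insert j E \<union> F}"
  have fA: "finite ?A"
    by (rule finite_subset[of _ "Pow (E \<union> F)"]) (use assms(1,2) in blast)+
  have fB: "finite ?B"
    by (rule finite_subset[of _ "Pow (insert j E \<union> F)"]) (use assms(1,2) in blast)+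
  have dAB: "?A \<inter> ?B = {}" using assms(3,4) by blast
  have eq: "{S. E \<subseteq> S \<and> S \<subseteq> E \<union> insert j F} = ?A \<union> ?B"
    by blast
  have "Zs L E (insert j F) = (\<Sum>S\<in>?A \<union> ?B. det_on S L)"
    unfolding Zs_def eq ..
  also have "\<dots> = (\<Sum>S\<in>?A. det_on S L) + (\<Sum>S\<in>?B. det_on S L)"
    by (rule sum.union_disjoint[OF fA fB dAB])
  finally show ?thesis unfolding Zs_def .
qed

lemma bform_w:
  assumes "symQ K Q"
  shows "(\<Sum>a<K. x a * (\<Sum>b<K. Q a b * v b)) = bform K Q x v"
    and "(\<Sum>a<K. (\<Sum>b<K. Q a b * v b) * y a) = bform K Q v y"
proof -
  show "(\<Sum>a<K. x a * (\<Sum>b<K. Q a b * v b)) = bform K Q x v"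
    unfolding bform_def by (simp add: sum_distrib_left mult.assoc)
  have "(\<Sum>a<K. (\<Sum>b<K. Q a b * v b) * y a) = (\<Sum>a<K. \<Sum>b<K. v b * Q b a * y a)"
  proof (rule sum.cong[OF refl])
    fix a assume a: "a \<in> {..<K}"
    show "(\<Sum>b<K. Q a b * v b) * y a = (\<Sum>b<K. v b * Q b a * y a)"
      unfolding sum_distrib_right
    proof (rule sum.cong[OF refl])
      fix b assume b: "b \<in> {..<K}"
      have "Q a b = Q b a" using assms a b unfolding symQ_def by auto
      thus "Q a b * v b * y a = v b * Q b a * y a" by simp
    qed
  qed
  also have "\<dots> = bform K Q v y" unfolding bform_def by (rule sum.swap)
  finally show "(\<Sum>a<K. (\<Sum>b<K. Q a b * v b) * y a) = bform K Q v y" .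
qed

lemma bform_upd:
  assumes "symQ K Q"
  shows "bform K (upd K fr Q v) x y = bform K Q x y - bform K Q x v * bform K Q v y / ((if fr then 1 else 0) + bform K Q v v)"
proof -
  define w where "w = (\<lambda>a. \<Sum>b<K. Q a b * v b)"
  define g where "g = (if fr then 1 else 0) + bform K Q v v"
  have gg: "(if fr then 1 else 0) + (\<Sum>a<K. v a * w a) = g"
    unfolding g_def w_def using bform_w(1)[OF assms] by simp
  have "bform K (upd K fr Q v) x y = (\<Sum>a<K. \<Sum>b<K. x a * Q a b * y b - (x a * w a) * (w b * y b) / g)"
    unfolding bform_def upd_def Let_def w_def[symmetric] gg
    by (simp add: algebra_simps)
  also have "\<dots> = bform K Q x y - (\<Sum>a<K. x a * w a) * (\<Sum>b<K. w b * y b) / g"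
  proof -
    have "(\<Sum>a<K. x a * w a) * (\<Sum>b<K. w b * y b) / g = (\<Sum>a<K. \<Sum>b<K. x a * w a * (w b * y b) / g)"
      by (simp add: sum_product sum_divide_distrib)
    thus ?thesis unfolding bform_def by (simp add: sum_subtractf)
  qed
  also have "(\<Sum>a<K. x a * w a) = bform K Q x v" unfolding w_def by (rule bform_w(1)[OF assms])
  also have "(\<Sum>b<K. w b * y b) = bform K Q v y" unfolding w_def by (rule bform_w(2)[OF assms])
  finally show ?thesis unfolding g_def .
qed

lemma symQ_upd: "symQ K Q \<Longrightarrow> symQ K (upd K fr Q v)"
  unfolding symQ_def upd_def Let_def by (simp add: mult.commute)

lemma bform_sym: "symQ K Q \<Longrightarrow> bform K Q x y = bform K Q y x"
  unfolding bform_def symQ_def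
  by (subst sum.swap) (auto intro!: sum.cong simp: mult_ac)

lemma bform_add: "bform K Q (\<lambda>a. x a + t * y a) (\<lambda>a. x a + t * y a)
   = bform K Q x x + t * bform K Q x y + t * bform K Q y x + t^2 * bform K Q y y"
  unfolding bform_def power2_eq_square
  by (simp add: algebra_simps sum.distrib sum_distrib_left)

lemma quad_cs:
  fixes A B C :: real
  assumes all: "\<And>t. 0 \<le> A + 2 * t * B + t^2 * C" and C: "0 \<le> C"
  shows "B^2 \<le> A * C"
proof (cases "C = 0")
  case True
  show ?thesis
  proof (rule ccontr)
    assume "\<not> ?thesis"
    hence B: "B \<noteq> 0" using True by simp
    have "0 \<le> A + 2 * (-(A+1)/(2*B)) * B + (-(A+1)/(2*B))^2 * C" by (rule all)
    also have "\<dots> = -1" using B True by (simp add: field_simps)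
    finally show False by simp
  qed
next
  case False
  hence Cp: "C > 0" using C by simp
  have "0 \<le> A + 2 * (-B/C) * B + (-B/C)^2 * C" by (rule all)
  also have "\<dots> = (A * C - B^2) / C" using Cp by (simp add: field_simps power2_eq_square)
  finally show ?thesis using Cp by (simp add: divide_nonneg_pos zero_le_divide_iff)
qed

lemma bform_cs:
  assumes "symQ K Q" "psdQ K Q"
  shows "(bform K Q x y)^2 \<le> bform K Q x x * bform K Q y y"
proof (rule quad_cs)
  fix t
  have "0 \<le> bform K Q (\<lambda>a. x a + t * y a) (\<lambda>a. x a + t * y a)" using assms(2) psdQ_def by blast
  thus "0 \<le> bform K Q x x + 2 * t * bform K Q x y + t^2 * bform K Q y y"
    unfolding bform_add using bform_sym[OF assms(1), of y x] by simp
  show "0 \<le> bform K Q y y" using assms(2) psdQ_def by blast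
qed

lemma psdQ_upd:
  assumes s: "symQ K Q" and p: "psdQ K Q"
    and g: "0 < (if fr then 1 else 0) + bform K Q v v"
  shows "psdQ K (upd K fr Q v)"
  unfolding psdQ_def
proof
  fix x
  let ?g = "(if fr then 1 else 0) + bform K Q v v"
  have cs: "(bform K Q x v)^2 \<le> bform K Q x x * bform K Q v v" by (rule bform_cs[OF s p])
  have qx: "0 \<le> bform K Q x x" using p psdQ_def by blast
  have "bform K Q x v * bform K Q v x / ?g = (bform K Q x v)^2 / ?g"
    using bform_sym[OF s, of v x] by (simp add: power2_eq_square)
  also have "\<dots> \<le> bform K Q x x * bform K Q v v / ?g"
    using cs g by (simp add: divide_right_mono)
  also have "\<dots> \<le> bform K Q x x"
  proof -
    have "bform K Q v v \<le> ?g" by simp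
    hence "bform K Q x x * bform K Q v v \<le> bform K Q x x * ?g" using qx by (simp add: mult_left_mono)
    thus ?thesis using g by (simp add: divide_le_eq)
  qed
  finally show "0 \<le> bform K (upd K fr Q v) x x"
    unfolding bform_upd[OF s] by simp
qed



lemma kmat_upd:
  assumes "symQ K Q"
  shows "kmat K (upd K fr Q (V j)) V = (\<lambda>r s. kmat K Q V r s - kmat K Q V r j * kmat K Q V j s / ((if fr then 1 else 0) + kmat K Q V j j))"
  unfolding kmat_def bform_upd[OF assms] ..

lemma Inv_init: "Inv K V {} {} 1 (\<lambda>a b. if a = b then 1 else 0)"
proof -
  have k: "kmat K (\<lambda>a b. if a = b then 1 else 0) V = gram K V"
    unfolding kmat_def bform_def gram_def
    by (intro ext) (simp add: if_distrib if_distribR sum.delta cong: if_cong)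
  have z: "Zs L R {} = det_on R L" for L R
  proof -
    have "{S. R \<subseteq> S \<and> S \<subseteq> R \<union> {}} = {R::nat set}" by auto
    thus ?thesis unfolding Zs_def by simp
  qed
  show ?thesis unfolding Inv_def symQ_def psdQ_def
  proof (intro conjI allI impI)
    fix x :: "nat \<Rightarrow> real"
    show "0 \<le> bform K (\<lambda>a b. if a = b then 1 else 0) x x"
      unfolding bform_def by (simp add: if_distrib if_distribR sum.delta cong: if_cong) (rule sum_nonneg, simp)
  next
    fix R :: "nat set"
    show "Zs (gram K V) ({} \<union> R) ({} - R) = 1 * det_on R (kmat K (\<lambda>a b. if a = b then 1 else 0) V)"
      using z k by simp
  qed auto
qed

lemma Inv_free:
  assumes I: "Inv K V T F c Q" and jT: "j \<notin> T" and jF: "j \<notin> F"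
  shows "Inv K V T (insert j F) (c * (1 + bform K Q (V j) (V j))) (upd K True Q (V j))"
proof -
  have s: "symQ K Q" and p: "psdQ K Q" and fT: "finite T" and fF: "finite F" and d: "T \<inter> F = {}"
    and Z: "\<And>R. finite R \<Longrightarrow> R \<inter> T = {} \<Longrightarrow> Zs (gram K V) (T \<union> R) (F - R) = c * det_on R (kmat K Q V)"
    using I unfolding Inv_def by auto
  define g where "g = 1 + bform K Q (V j) (V j)"
  have g0: "0 < g" using p unfolding g_def psdQ_def by (smt (verit))
  have gk: "g = 1 + kmat K Q V j j" unfolding g_def kmat_def ..
  have km: "kmat K (upd K True Q (V j)) V = (\<lambda>r s. kmat K Q V r s - kmat K Q V r j * kmat K Q V j s / (1 + kmat K Q V j j))"
    using kmat_upd[OF s, of True V j] by simp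
  show ?thesis unfolding Inv_def
  proof (intro conjI allI impI)
    show "symQ K (upd K True Q (V j))" by (rule symQ_upd[OF s])
    show "psdQ K (upd K True Q (V j))" by (rule psdQ_upd[OF s p]) (use g0 g_def in simp)
    show "finite T" "finite (insert j F)" using fT fF by auto
    show "T \<inter> insert j F = {}" using d jT by auto
    fix R assume R: "finite R" "R \<inter> T = {}"
    show "Zs (gram K V) (T \<union> R) (insert j F - R) = c * (1 + bform K Q (V j) (V j)) * det_on R (kmat K (upd K True Q (V j)) V)"
    proof (cases "j \<in> R")
      case True
      have "insert j F - R = F - R" using True by auto
      hence "Zs (gram K V) (T \<union> R) (insert j F - R) = c * det_on R (kmat K Q V)" using Z[OF R] by simp
      also have "det_on R (kmat K Q V) = g * det_on R (kmat K (upd K True Q (V j)) V)"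
        unfolding km gk by (rule det_on_rank1_in[OF R(1) True]) (use g0 gk in simp)
      finally show ?thesis unfolding g_def by simp
    next
      case False
      have e1: "insert j F - R = insert j (F - R)" using False by auto
      have "Zs (gram K V) (T \<union> R) (insert j (F - R)) = Zs (gram K V) (T \<union> R) (F - R) + Zs (gram K V) (insert j (T \<union> R)) (F - R)"
        by (rule Zs_split) (use fT fF R jT jF False in auto)
      also have "Zs (gram K V) (T \<union> R) (F - R) = c * det_on R (kmat K Q V)" using Z[OF R] .
      also have "Zs (gram K V) (insert j (T \<union> R)) (F - R) = c * det_on (insert j R) (kmat K Q V)"
      proof -
        have "insert j (T \<union> R) = T \<union> insert j R" "F - R = F - insert j R" using jF by auto
        thus ?thesis using Z[of "insert j R"] R jT by simp
      qed
      also have "c * det_on R (kmat K Q V) + c * det_on (insert j R) (kmat K Q V)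
          = c * (det_on R (kmat K Q V) + det_on (insert j R) (kmat K Q V))" by (simp add: algebra_simps)
      also have "det_on R (kmat K Q V) + det_on (insert j R) (kmat K Q V) = g * det_on R (kmat K (upd K True Q (V j)) V)"
        unfolding km gk by (rule det_on_rank1_out[OF R(1) False]) (use g0 gk in simp)
      finally show ?thesis using e1 unfolding g_def by simp
    qed
  qed
qed

lemma Inv_forced:
  assumes I: "Inv K V T F c Q" and aT: "a \<notin> T" and aF: "a \<notin> F" and d0: "bform K Q (V a) (V a) \<noteq> 0"
  shows "Inv K V (insert a T) F (c * bform K Q (V a) (V a)) (upd K False Q (V a))"
proof -
  have s: "symQ K Q" and p: "psdQ K Q" and fT: "finite T" and fF: "finite F" and d: "T \<inter> F = {}"
    and Z: "\<And>R. finite R \<Longrightarrow> R \<inter> T = {} \<Longrightarrow> Zs (gram K V) (T \<union> R) (F - R) = c * det_on R (kmat K Q V)"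
    using I unfolding Inv_def by auto
  have dp: "0 < bform K Q (V a) (V a)" using p d0 unfolding psdQ_def by (metis order_le_less)
  have km: "kmat K (upd K False Q (V a)) V = (\<lambda>r s. kmat K Q V r s - kmat K Q V r a * kmat K Q V a s / kmat K Q V a a)"
    using kmat_upd[OF s, of False V a] by simp
  show ?thesis unfolding Inv_def
  proof (intro conjI allI impI)
    show "symQ K (upd K False Q (V a))" by (rule symQ_upd[OF s])
    show "psdQ K (upd K False Q (V a))" by (rule psdQ_upd[OF s p]) (use dp in simp)
    show "finite (insert a T)" "finite F" using fT fF by auto
    show "insert a T \<inter> F = {}" using d aF by auto
    fix R assume R: "finite R" "R \<inter> insert a T = {}"
    have aR: "a \<notin> R" using R by auto
    have "insert a T \<union> R = T \<union> insert a R" "F - R = F - insert a R" using aF by auto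
    hence "Zs (gram K V) (insert a T \<union> R) (F - R) = c * det_on (insert a R) (kmat K Q V)"
      using Z[of "insert a R"] R aT by auto
    also have "det_on (insert a R) (kmat K Q V) = kmat K Q V a a * det_on R (kmat K (upd K False Q (V a)) V)"
      unfolding km by (rule det_on_pivot[OF R(1) aR]) (use d0 in \<open>simp add: kmat_def\<close>)
    finally show "Zs (gram K V) (insert a T \<union> R) (F - R) = c * bform K Q (V a) (V a) * det_on R (kmat K (upd K False Q (V a)) V)"
      by (simp add: kmat_def)
  qed
qed

lemma Inv_zero_row:
  assumes I: "Inv K V T F c Q" and d0: "bform K Q (V a) (V a) = 0" and R: "finite R" "a \<in> R"
  shows "det_on R (kmat K Q V) = 0"
proof -
  have s: "symQ K Q" and p: "psdQ K Q" using I unfolding Inv_def by auto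
  have row: "kmat K Q V a j = 0" for j
  proof -
    have "(bform K Q (V a) (V j))^2 \<le> 0" using bform_cs[OF s p, of "V a" "V j"] d0 by simp
    thus ?thesis unfolding kmat_def by simp
  qed
  have "det_on R (kmat K Q V) = 0 * det_on (R - {a}) (kmat K Q V)"
    by (rule det_on_row_unit[OF R]) (simp add: row)
  thus ?thesis by simp
qed



definition fold_upd :: "nat \<Rightarrow> (nat \<Rightarrow> nat \<Rightarrow> real) \<Rightarrow> bool \<Rightarrow> (nat \<Rightarrow> nat \<Rightarrow> real) \<Rightarrow> nat list \<Rightarrow> nat \<Rightarrow> nat \<Rightarrow> real" where
  "fold_upd K V fr Q xs = foldl (\<lambda>Q j. upd K fr Q (V j)) Q xs"

definition gden :: "nat \<Rightarrow> bool \<Rightarrow> (nat \<Rightarrow> nat \<Rightarrow> real) \<Rightarrow> (nat \<Rightarrow> real) \<Rightarrow> real" where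
  "gden K fr Q v = (if fr then 1 else 0) + (\<Sum>a<K. v a * (\<Sum>b<K. Q a b * v b))"

lemma gden_bform: "gden K fr Q v = (if fr then 1 else 0) + bform K Q v v"
  unfolding gden_def bform_def by (simp add: sum_distrib_left mult.assoc)

lemma fold_upd_snoc: "t < length xs \<Longrightarrow> fold_upd K V fr Q (take (Suc t) xs) = upd K fr (fold_upd K V fr Q (take t xs)) (V (xs ! t))"
  unfolding fold_upd_def by (simp add: take_Suc_conv_app_nth)

lemma distinct_nth_notin_take: "distinct xs \<Longrightarrow> t < length xs \<Longrightarrow> xs ! t \<notin> set (take t xs)"
  by (auto simp: in_set_conv_nth nth_eq_iff_index_eq)

lemma free_list:
  assumes I: "Inv K V T F c Q" and dx: "distinct xs" and dj: "set xs \<inter> (T \<union> F) = {}"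
  shows "t \<le> length xs \<Longrightarrow> \<exists>c'. Inv K V T (F \<union> set (take t xs)) c' (fold_upd K V True Q (take t xs))"
proof (induction t)
  case 0
  then show ?case using I by (auto simp: fold_upd_def)
next
  case (Suc t)
  then obtain c' where c': "Inv K V T (F \<union> set (take t xs)) c' (fold_upd K V True Q (take t xs))" by auto
  have tl: "t < length xs" using Suc by simp
  have nT: "xs ! t \<notin> T" "xs ! t \<notin> F \<union> set (take t xs)"
    using dj distinct_nth_notin_take[OF dx tl] nth_mem[OF tl] by auto
  have "set (take (Suc t) xs) = insert (xs ! t) (set (take t xs))"
    using tl by (simp add: take_Suc_conv_app_nth)
  then show ?case using Inv_free[OF c' nT] fold_upd_snoc[OF tl] by auto
qed

lemma forced_nz:
  assumes I: "Inv K V T F c Q" and dx: "distinct xs" and dj: "set xs \<inter> (T \<union> F) = {}"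
    and nz: "Zs (gram K V) (T \<union> set xs) F \<noteq> 0" and tl: "t < length xs"
    and It: "Inv K V (T \<union> set (take t xs)) F c' Qt"
  shows "bform K Qt (V (xs ! t)) (V (xs ! t)) \<noteq> 0"
proof
  assume d0: "bform K Qt (V (xs ! t)) (V (xs ! t)) = 0"
  let ?R = "set (drop t xs)"
  have xR: "xs ! t \<in> ?R" using tl by (metis Cons_nth_drop_Suc list.set_intros(1))
  have td: "set (take t xs) \<union> ?R = set xs" by (metis append_take_drop_id set_append)
  have d1: "set (take t xs) \<inter> ?R = {}" by (rule set_take_disj_set_drop_if_distinct[OF dx le_refl])
  have disj: "?R \<inter> (T \<union> set (take t xs)) = {}"
    using dj d1 td by blast
  have e1: "T \<union> set (take t xs) \<union> ?R = T \<union> set xs" using td by blast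
  have e2: "F - ?R = F" using dj set_drop_subset[of t xs] by auto
  have "Zs (gram K V) (T \<union> set xs) F = c' * det_on ?R (kmat K Qt V)"
  proof -
    have "\<forall>R. finite R \<longrightarrow> R \<inter> (T \<union> set (take t xs)) = {} \<longrightarrow> Zs (gram K V) (T \<union> set (take t xs) \<union> R) (F - R) = c' * det_on R (kmat K Qt V)"
      using It unfolding Inv_def by blast
    hence "Zs (gram K V) (T \<union> set (take t xs) \<union> ?R) (F - ?R) = c' * det_on ?R (kmat K Qt V)"
      using disj by blast
    thus ?thesis unfolding e1 e2 .
  qed
  also have "det_on ?R (kmat K Qt V) = 0" by (rule Inv_zero_row[OF It d0 finite_set xR])
  finally show False using nz by simp
qed

lemma forced_list:
  assumes I: "Inv K V T F c Q" and dx: "distinct xs" and dj: "set xs \<inter> (T \<union> F) = {}"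
    and nz: "Zs (gram K V) (T \<union> set xs) F \<noteq> 0"
  shows "t \<le> length xs \<Longrightarrow> \<exists>c'. Inv K V (T \<union> set (take t xs)) F c' (fold_upd K V False Q (take t xs))"
proof (induction t)
  case 0
  then show ?case using I by (auto simp: fold_upd_def)
next
  case (Suc t)
  then obtain c' where c': "Inv K V (T \<union> set (take t xs)) F c' (fold_upd K V False Q (take t xs))" by auto
  have tl: "t < length xs" using Suc by simp
  have nT: "xs ! t \<notin> T \<union> set (take t xs)" "xs ! t \<notin> F"
    using dj distinct_nth_notin_take[OF dx tl] nth_mem[OF tl] by auto
  have d: "bform K (fold_upd K V False Q (take t xs)) (V (xs ! t)) (V (xs ! t)) \<noteq> 0"
    by (rule forced_nz[OF I dx dj nz tl c'])
  have "set (take (Suc t) xs) = insert (xs ! t) (set (take t xs))"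
    using tl by (simp add: take_Suc_conv_app_nth)
  then show ?case using Inv_forced[OF c' nT d] fold_upd_snoc[OF tl] by auto
qed

lemma event_prob_Zs:
  assumes "B \<subseteq> {..<M}"
  shows "dpp_event_prob M L (\<lambda>S. B \<subseteq> S) = Zs L B ({..<M} - B) / det_on {..<M} (\<lambda>i j. L i j + (if i = j then 1 else 0))"
proof -
  have "{S. S \<subseteq> {..<M} \<and> B \<subseteq> S} = {S. B \<subseteq> S \<and> S \<subseteq> B \<union> ({..<M} - B)}" using assms by auto
  thus ?thesis unfolding dpp_event_prob_def dpp_prob_def Zs_def by (simp add: sum_divide_distrib)
qed

definition Q1 :: "nat \<Rightarrow> nat \<Rightarrow> (nat \<Rightarrow> nat \<Rightarrow> real) \<Rightarrow> nat set \<Rightarrow> nat \<Rightarrow> nat \<Rightarrow> real" where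
  "Q1 M K V A = fold_upd K V True (\<lambda>a b. if a = b then 1 else 0) (sorted_list_of_set ({..<M} - A))"

definition Q2 :: "nat \<Rightarrow> nat \<Rightarrow> (nat \<Rightarrow> nat \<Rightarrow> real) \<Rightarrow> nat set \<Rightarrow> nat \<Rightarrow> nat \<Rightarrow> real" where
  "Q2 M K V A = fold_upd K V False (Q1 M K V A) (sorted_list_of_set A)"

lemma math_main:
  assumes A: "A \<subseteq> {..<M}" and pos: "0 < dpp_event_prob M (gram K V) (\<lambda>S. A \<subseteq> S)"
  shows "\<forall>t < card ({..<M} - A). gden K True (fold_upd K V True (\<lambda>a b. if a = b then 1 else 0) (take t (sorted_list_of_set ({..<M} - A)))) (V (sorted_list_of_set ({..<M} - A) ! t)) \<noteq> 0"
    and "\<forall>t < card A. gden K False (fold_upd K V False (Q1 M K V A) (take t (sorted_list_of_set A))) (V (sorted_list_of_set A ! t)) \<noteq> 0"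
    and "\<forall>i \<in> {..<M} - A. cond_marginal M (gram K V) A i = bform K (Q2 M K V A) (V i) (V i)"
proof -
  let ?L = "gram K V"
  let ?Ab = "{..<M} - A"
  let ?fl = "sorted_list_of_set ?Ab"
  let ?al = "sorted_list_of_set A"
  let ?D = "det_on {..<M} (\<lambda>i j. ?L i j + (if i = j then 1 else 0))"
  have finA: "finite A" using A finite_subset by blast
  have pe: "dpp_event_prob M ?L (\<lambda>S. A \<subseteq> S) = Zs ?L A ?Ab / ?D" by (rule event_prob_Zs[OF A])
  have D0: "?D \<noteq> 0" using pos pe by auto
  have Z0: "Zs ?L A ?Ab \<noteq> 0" using pos pe by auto
  have lfl: "length ?fl = card ?Ab" and lal: "length ?al = card A" using finA by auto
  have I0: "Inv K V {} {} 1 (\<lambda>a b. if a = b then 1 else 0)" by (rule Inv_init)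
  have fr: "\<exists>c'. Inv K V {} ({} \<union> set (take t ?fl)) c' (fold_upd K V True (\<lambda>a b. if a = b then 1 else 0) (take t ?fl))"
    if "t \<le> length ?fl" for t
    by (rule free_list[OF I0]) (use that in auto)
  show "\<forall>t < card ?Ab. gden K True (fold_upd K V True (\<lambda>a b. if a = b then 1 else 0) (take t ?fl)) (V (?fl ! t)) \<noteq> 0"
  proof (intro allI impI)
    fix t assume "t < card ?Ab"
    then obtain c' where "Inv K V {} ({} \<union> set (take t ?fl)) c' (fold_upd K V True (\<lambda>a b. if a = b then 1 else 0) (take t ?fl))"
      using fr lfl by fastforce
    hence "psdQ K (fold_upd K V True (\<lambda>a b. if a = b then 1 else 0) (take t ?fl))" unfolding Inv_def by auto
    thus "gden K True (fold_upd K V True (\<lambda>a b. if a = b then 1 else 0) (take t ?fl)) (V (?fl ! t)) \<noteq> 0"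
      unfolding gden_bform psdQ_def by (smt (verit))
  qed
  obtain c1 where I1: "Inv K V {} ?Ab c1 (Q1 M K V A)"
    using fr[of "length ?fl"] unfolding Q1_def by auto
  have dj: "set ?al \<inter> ({} \<union> ?Ab) = {}" using finA by auto
  have nzA: "Zs ?L ({} \<union> set ?al) ?Ab \<noteq> 0" using Z0 finA by simp
  have fo: "\<exists>c'. Inv K V ({} \<union> set (take t ?al)) ?Ab c' (fold_upd K V False (Q1 M K V A) (take t ?al))"
    if "t \<le> length ?al" for t
    by (rule forced_list[OF I1 _ dj nzA that]) simp
  show "\<forall>t < card A. gden K False (fold_upd K V False (Q1 M K V A) (take t ?al)) (V (?al ! t)) \<noteq> 0"
  proof (intro allI impI)
    fix t assume t: "t < card A"
    then obtain c' where c': "Inv K V ({} \<union> set (take t ?al)) ?Ab c' (fold_upd K V False (Q1 M K V A) (take t ?al))"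
      using fo lal by fastforce
    have "bform K (fold_upd K V False (Q1 M K V A) (take t ?al)) (V (?al ! t)) (V (?al ! t)) \<noteq> 0"
      by (rule forced_nz[OF I1 _ dj nzA _ c']) (use t lal in auto)
    thus "gden K False (fold_upd K V False (Q1 M K V A) (take t ?al)) (V (?al ! t)) \<noteq> 0"
      unfolding gden_bform by simp
  qed
  obtain c2 where I2: "Inv K V A ?Ab c2 (Q2 M K V A)"
    using fo[of "length ?al"] finA unfolding Q2_def by auto
  have ZI: "\<And>R. finite R \<Longrightarrow> R \<inter> A = {} \<Longrightarrow> Zs ?L (A \<union> R) (?Ab - R) = c2 * det_on R (kmat K (Q2 M K V A) V)"
    using I2 unfolding Inv_def by auto
  have cZ: "Zs ?L A ?Ab = c2" using ZI[of "{}"] by (simp add: det_on_empty)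
  show "\<forall>i \<in> ?Ab. cond_marginal M ?L A i = bform K (Q2 M K V A) (V i) (V i)"
  proof
    fix i assume i: "i \<in> ?Ab"
    have Ai: "A \<union> {i} \<subseteq> {..<M}" using A i by auto
    have "Zs ?L (A \<union> {i}) (?Ab - {i}) = c2 * bform K (Q2 M K V A) (V i) (V i)"
      using ZI[of "{i}"] i by (simp add: det_on_single kmat_def)
    moreover have "?Ab - {i} = {..<M} - (A \<union> {i})" by auto
    ultimately have zi: "Zs ?L (A \<union> {i}) ({..<M} - (A \<union> {i})) = c2 * bform K (Q2 M K V A) (V i) (V i)" by simp
    have e1: "dpp_event_prob M ?L (\<lambda>S. A \<union> {i} \<subseteq> S) = c2 * bform K (Q2 M K V A) (V i) (V i) / ?D"
      using event_prob_Zs[OF Ai, of ?L] unfolding zi .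
    have e0: "dpp_event_prob M ?L (\<lambda>S. A \<subseteq> S) = c2 / ?D" using pe cZ by simp
    show "cond_marginal M ?L A i = bform K (Q2 M K V A) (V i) (V i)"
      unfolding cond_marginal_def e1 e0 using D0 Z0 cZ by simp
  qed
qed



type_synonym frag = "prog \<Rightarrow> prog"

definition hoare :: "((nat \<Rightarrow> real) \<Rightarrow> bool) \<Rightarrow> frag \<Rightarrow> nat \<Rightarrow> ((nat \<Rightarrow> real) \<Rightarrow> bool) \<Rightarrow> bool" where
  "hoare P f n R \<longleftrightarrow> (\<forall>k r. P r \<longrightarrow> (\<exists>r'. R r' \<and> run (f k) r = map_option (\<lambda>(o', c). (o', c + n)) (run k r')))"

lemma hoare_arith:
  assumes "\<And>r. P r \<Longrightarrow> \<exists>v. apply_aop op (r a) (r b) = Some v \<and> R (r(d := v))"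
  shows "hoare P (Arith op d a b) 1 R"
  unfolding hoare_def
proof (intro allI impI)
  fix k r assume "P r"
  then obtain v where v: "apply_aop op (r a) (r b) = Some v" "R (r(d := v))" using assms by blast
  show "\<exists>r'. R r' \<and> run (Arith op d a b k) r = map_option (\<lambda>(o', c). (o', c + 1)) (run k r')"
    by (rule exI[of _ "r(d := v)"]) (auto simp: v split: option.split)
qed

lemma hoare_const:
  assumes "\<And>r. P r \<Longrightarrow> R (r(d := of_rat q))"
  shows "hoare P (Const q d) 0 R"
  unfolding hoare_def
proof (intro allI impI)
  fix k r assume "P r"
  thus "\<exists>r'. R r' \<and> run (Const q d k) r = map_option (\<lambda>(o', c). (o', c + 0)) (run k r')"
    using assms by (intro exI[of _ "r(d := of_rat q)"]) (auto simp: option.map_id)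
qed

lemma hoare_seq:
  assumes "hoare P f n1 Q" "hoare Q g n2 R"
  shows "hoare P (f \<circ> g) (n1 + n2) R"
  unfolding hoare_def
proof (intro allI impI)
  fix k r assume "P r"
  then obtain r1 where r1: "Q r1" "run (f (g k)) r = map_option (\<lambda>(o', c). (o', c + n1)) (run (g k) r1)"
    using assms(1) unfolding hoare_def by blast
  then obtain r2 where r2: "R r2" "run (g k) r1 = map_option (\<lambda>(o', c). (o', c + n2)) (run k r2)"
    using assms(2) unfolding hoare_def by blast
  show "\<exists>r'. R r' \<and> run ((f \<circ> g) k) r = map_option (\<lambda>(o', c). (o', c + (n1 + n2))) (run k r')"
    apply (rule exI[of _ r2])
    apply (simp add: r1 r2 option.map_comp o_def)
    apply (intro option.map_cong)
     apply (auto split: prod.split)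
    done
qed

lemma hoare_conseq:
  assumes "hoare P f n R" "\<And>r. P' r \<Longrightarrow> P r" "\<And>r. R r \<Longrightarrow> R' r"
  shows "hoare P' f n R'"
  using assms unfolding hoare_def by blast

lemma hoare_cost: "hoare P f n R \<Longrightarrow> n = m \<Longrightarrow> hoare P f m R" by simp

lemma hoare_id:
  assumes "\<And>r. P r \<Longrightarrow> R r"
  shows "hoare P id 0 R"
  unfolding hoare_def using assms by (auto simp: option.map_id)

lemma hoare_ghost:
  assumes "\<And>r0. P r0 \<Longrightarrow> hoare (\<lambda>r. r = r0) f n R"
  shows "hoare P f n R"
  using assms unfolding hoare_def by blast

fun lp :: "nat \<Rightarrow> (nat \<Rightarrow> frag) \<Rightarrow> frag" where
  "lp 0 b = id"
| "lp (Suc n) b = lp n b \<circ> b n"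

lemma hoare_lp:
  assumes "\<And>i. i < n \<Longrightarrow> hoare (I i) (b i) c (I (Suc i))"
  shows "hoare (I 0) (lp n b) (n * c) (I n)"
  using assms
proof (induction n)
  case 0
  have "hoare (I 0) id 0 (I 0)" by (rule hoare_id)
  then show ?case by (simp add: id_def)
next
  case (Suc n)
  have "hoare (I 0) (lp n b \<circ> b n) (n * c + c) (I (Suc n))"
    by (rule hoare_seq) (use Suc in auto)
  then show ?case by (simp add: add.commute o_def)
qed

lemma hoare_run:
  assumes "hoare P f n R" "P r"
  shows "\<exists>r'. R r' \<and> run (f (Halt out)) r = Some (\<lambda>i. r' (out i), n)"
proof -
  obtain r' where "R r'" "run (f (Halt out)) r = map_option (\<lambda>(o', c). (o', c + n)) (run (Halt out) r')"
    using assms unfolding hoare_def by blast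
  thus ?thesis by auto
qed

definition dot :: "nat \<Rightarrow> nat \<Rightarrow> (nat \<Rightarrow> nat) \<Rightarrow> (nat \<Rightarrow> nat) \<Rightarrow> nat \<Rightarrow> frag" where
  "dot acc tmp xs ys len = Const 0 acc \<circ> lp len (\<lambda>t. Arith Mul tmp (xs t) (ys t) \<circ> Arith Add acc acc tmp)"

lemma dot_spec:
  assumes at: "acc \<noteq> tmp" and dis: "\<And>t. t < len \<Longrightarrow> xs t \<noteq> acc \<and> xs t \<noteq> tmp \<and> ys t \<noteq> acc \<and> ys t \<noteq> tmp"
  shows "hoare (\<lambda>r. r = r0) (dot acc tmp xs ys len) (2 * len)
     (\<lambda>r. r acc = (\<Sum>t<len. r0 (xs t) * r0 (ys t)) \<and> (\<forall>x. x \<noteq> acc \<longrightarrow> x \<noteq> tmp \<longrightarrow> r x = r0 x))"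
proof -
  define I where "I i r \<longleftrightarrow> r acc = (\<Sum>t<i. r0 (xs t) * r0 (ys t)) \<and> (\<forall>x. x \<noteq> acc \<longrightarrow> x \<noteq> tmp \<longrightarrow> r x = r0 x)" for i r
  have c: "hoare (\<lambda>r. r = r0) (Const 0 acc) 0 (I 0)"
    by (rule hoare_const) (auto simp: I_def)
  have l: "hoare (I 0) (lp len (\<lambda>t. Arith Mul tmp (xs t) (ys t) \<circ> Arith Add acc acc tmp)) (len * 2) (I len)"
  proof (rule hoare_lp)
    fix i assume i: "i < len"
    let ?J = "\<lambda>r. r acc = (\<Sum>t<i. r0 (xs t) * r0 (ys t)) \<and> r tmp = r0 (xs i) * r0 (ys i) \<and> (\<forall>x. x \<noteq> acc \<longrightarrow> x \<noteq> tmp \<longrightarrow> r x = r0 x)"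
    have "hoare (I i) (Arith Mul tmp (xs i) (ys i) \<circ> Arith Add acc acc tmp) (1 + 1) (I (Suc i))"
    proof (rule hoare_seq)
      show "hoare (I i) (Arith Mul tmp (xs i) (ys i)) 1 ?J"
        by (rule hoare_arith) (use dis[OF i] at in \<open>auto simp: I_def\<close>)
      show "hoare ?J (Arith Add acc acc tmp) 1 (I (Suc i))"
        by (rule hoare_arith) (use at in \<open>auto simp: I_def\<close>)
    qed
    thus "hoare (I i) (Arith Mul tmp (xs i) (ys i) \<circ> Arith Add acc acc tmp) 2 (I (Suc i))" by (metis one_add_one)
  qed
  have "hoare (\<lambda>r. r = r0) (dot acc tmp xs ys len) (0 + len * 2) (I len)"
    unfolding dot_def by (rule hoare_seq[OF c l])
  hence "hoare (\<lambda>r. r = r0) (dot acc tmp xs ys len) (2 * len) (I len)" by (simp add: mult.commute)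
  thus ?thesis by (rule hoare_conseq) (auto simp: I_def)
qed



definition matvec :: "(nat \<Rightarrow> nat) \<Rightarrow> nat \<Rightarrow> (nat \<Rightarrow> nat \<Rightarrow> nat) \<Rightarrow> (nat \<Rightarrow> nat) \<Rightarrow> nat \<Rightarrow> frag" where
  "matvec wr tmp qr inp K = lp K (\<lambda>a. dot (wr a) tmp (qr a) inp K)"

lemma matvec_spec:
  assumes inj: "inj_on wr {..<K}" and wt: "\<And>a. a < K \<Longrightarrow> wr a \<noteq> tmp"
    and q: "\<And>a b. a < K \<Longrightarrow> b < K \<Longrightarrow> qr a b \<notin> wr ` {..<K} \<and> qr a b \<noteq> tmp"
    and i: "\<And>b. b < K \<Longrightarrow> inp b \<notin> wr ` {..<K} \<and> inp b \<noteq> tmp"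
  shows "hoare (\<lambda>r. r = r0) (matvec wr tmp qr inp K) (K * (2 * K))
     (\<lambda>r. (\<forall>a<K. r (wr a) = (\<Sum>b<K. r0 (qr a b) * r0 (inp b))) \<and> (\<forall>x. x \<notin> wr ` {..<K} \<longrightarrow> x \<noteq> tmp \<longrightarrow> r x = r0 x))"
proof -
  define I where "I = (\<lambda>a r. (\<forall>a'<a. r (wr a') = (\<Sum>b<K. r0 (qr a' b) * r0 (inp b))) \<and> (\<forall>x. x \<notin> wr ` {..<a} \<longrightarrow> x \<noteq> tmp \<longrightarrow> r x = r0 x))"
  have h: "hoare (I 0) (lp K (\<lambda>a. dot (wr a) tmp (qr a) inp K)) (K * (2 * K)) (I K)"
  proof (rule hoare_lp)
    fix a assume a: "a < K"
    show "hoare (I a) (dot (wr a) tmp (qr a) inp K) (2 * K) (I (Suc a))"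
    proof (rule hoare_ghost)
      fix r1 assume r1: "I a r1"
      have "hoare (\<lambda>r. r = r1) (dot (wr a) tmp (qr a) inp K) (2 * K)
         (\<lambda>r. r (wr a) = (\<Sum>t<K. r1 (qr a t) * r1 (inp t)) \<and> (\<forall>x. x \<noteq> wr a \<longrightarrow> x \<noteq> tmp \<longrightarrow> r x = r1 x))"
        by (rule dot_spec) (use wt[OF a] q[OF a] i a in auto)
      then show "hoare (\<lambda>r. r = r1) (dot (wr a) tmp (qr a) inp K) (2 * K) (I (Suc a))"
      proof (rule hoare_conseq)
        fix r assume r: "r (wr a) = (\<Sum>t<K. r1 (qr a t) * r1 (inp t)) \<and> (\<forall>x. x \<noteq> wr a \<longrightarrow> x \<noteq> tmp \<longrightarrow> r x = r1 x)"
        have s1: "(\<Sum>t<K. r1 (qr a t) * r1 (inp t)) = (\<Sum>t<K. r0 (qr a t) * r0 (inp t))"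
        proof (rule sum.cong[OF refl])
          fix t assume "t \<in> {..<K}"
          hence "qr a t \<notin> wr ` {..<a}" "qr a t \<noteq> tmp" "inp t \<notin> wr ` {..<a}" "inp t \<noteq> tmp"
            using q[OF a, of t] i[of t] a by auto
          thus "r1 (qr a t) * r1 (inp t) = r0 (qr a t) * r0 (inp t)" using r1 unfolding I_def by auto
        qed
        show "I (Suc a) r" unfolding I_def
        proof (intro conjI allI impI)
          fix a' assume a': "a' < Suc a"
          show "r (wr a') = (\<Sum>b<K. r0 (qr a' b) * r0 (inp b))"
          proof (cases "a' = a")
            case True then show ?thesis using r s1 by simp
          next
            case False
            hence "wr a' \<noteq> wr a" using inj a a' by (auto dest: inj_onD)
            moreover have "wr a' \<noteq> tmp" using wt a a' by simp
            ultimately show ?thesis using r r1 False a' unfolding I_def by auto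
          qed
        next
          fix x assume x: "x \<notin> wr ` {..<Suc a}" "x \<noteq> tmp"
          hence "x \<noteq> wr a" "x \<notin> wr ` {..<a}" by auto
          thus "r x = r0 x" using r r1 x unfolding I_def by auto
        qed
      qed simp
    qed
  qed
  show ?thesis unfolding matvec_def
    by (rule hoare_conseq[OF h]) (simp_all add: I_def)
qed



lemma ab_lt: "a < K \<Longrightarrow> b < (K::nat) \<Longrightarrow> a * K + b < K * K"
proof -
  assume "a < K" "b < K"
  hence "a * K + b < a * K + K" by simp
  also have "\<dots> = (a + 1) * K" by simp
  also have "\<dots> \<le> K * K" using \<open>a < K\<close> by (intro mult_right_mono) auto
  finally show ?thesis .
qed

lemma jb_lt: "j < M \<Longrightarrow> b < (K::nat) \<Longrightarrow> j * K + b < M * K"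
proof -
  assume "j < M" "b < K"
  hence "j * K + b < j * K + K" by simp
  also have "\<dots> = (j + 1) * K" by simp
  also have "\<dots> \<le> M * K" using \<open>j < M\<close> by (intro mult_right_mono) auto
  finally show ?thesis .
qed

lemma ab_inj: "b < (K::nat) \<Longrightarrow> b' < K \<Longrightarrow> a * K + b = a' * K + b' \<Longrightarrow> a = a' \<and> b = b'"
proof -
  assume h: "b < K" "b' < K" "a * K + b = a' * K + b'"
  have K0: "0 < K" using h by simp
  have "(a * K + b) div K = a" "(a' * K + b') div K = a'" "(a * K + b) mod K = b" "(a' * K + b') mod K = b'"
    using h(1,2) K0 by simp_all
  moreover have "(a * K + b) div K = (a' * K + b') div K" "(a * K + b) mod K = (a' * K + b') mod K"
    using h(3) by simp_all
  ultimately show ?thesis by simp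
qed

definition qR :: "nat \<Rightarrow> nat \<Rightarrow> nat \<Rightarrow> nat \<Rightarrow> nat" where "qR M K a b = M * K + (a * K + b)"
definition wR :: "nat \<Rightarrow> nat \<Rightarrow> nat \<Rightarrow> nat" where "wR M K a = M * K + K * K + a"
definition tR :: "nat \<Rightarrow> nat \<Rightarrow> nat" where "tR M K = M * K + K * K + K"
definition inR :: "nat \<Rightarrow> nat \<Rightarrow> nat \<Rightarrow> nat" where "inR K j b = j * K + b"
definition outR :: "nat \<Rightarrow> nat \<Rightarrow> nat \<Rightarrow> nat" where "outR M K i = tR M K + 4 + i"

definition Qat :: "nat \<Rightarrow> nat \<Rightarrow> (nat \<Rightarrow> real) \<Rightarrow> (nat \<Rightarrow> nat \<Rightarrow> real) \<Rightarrow> bool" where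
  "Qat M K r Q \<longleftrightarrow> (\<forall>a<K. \<forall>b<K. r (qR M K a b) = Q a b)"

definition keep :: "nat \<Rightarrow> nat \<Rightarrow> (nat \<Rightarrow> real) \<Rightarrow> (nat \<Rightarrow> real) \<Rightarrow> bool" where
  "keep M K r0 r \<longleftrightarrow> (\<forall>x. (x < M * K \<or> tR M K + 4 \<le> x) \<longrightarrow> r x = r0 x)"

definition updQ :: "nat \<Rightarrow> nat \<Rightarrow> frag" where
  "updQ M K = lp K (\<lambda>a. lp K (\<lambda>b. Arith Mul (tR M K) (wR M K a) (wR M K b) \<circ> Arith Div (tR M K) (tR M K) (tR M K + 3)
      \<circ> Arith Sub (qR M K a b) (qR M K a b) (tR M K)))"

definition item :: "nat \<Rightarrow> nat \<Rightarrow> bool \<Rightarrow> nat \<Rightarrow> frag" where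
  "item M K fr j = matvec (wR M K) (tR M K) (qR M K) (inR K j) K
     \<circ> dot (tR M K + 1) (tR M K) (inR K j) (wR M K) K
     \<circ> Const (if fr then 1 else 0) (tR M K + 2)
     \<circ> Arith Add (tR M K + 3) (tR M K + 2) (tR M K + 1)
     \<circ> updQ M K"

lemma upd_eq: "upd K fr Q v a b = Q a b - (\<Sum>c<K. Q a c * v c) * (\<Sum>c<K. Q b c * v c) / gden K fr Q v"
  unfolding upd_def gden_def Let_def by simp

lemma updQ_spec:
  assumes g0: "g \<noteq> 0"
  shows "hoare (\<lambda>r. Qat M K r Q \<and> (\<forall>c<K. r (wR M K c) = w c) \<and> r (tR M K + 3) = g \<and> keep M K r0 r)
     (updQ M K) (K * (K * 3))
     (\<lambda>r. Qat M K r (\<lambda>a b. Q a b - w a * w b / g) \<and> keep M K r0 r)"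
proof -
  define J where "J = (\<lambda>a b r. (\<forall>a'<K. \<forall>b'<K. r (qR M K a' b') = (if a' < a \<or> (a' = a \<and> b' < b) then Q a' b' - w a' * w b' / g else Q a' b'))
      \<and> (\<forall>c<K. r (wR M K c) = w c) \<and> r (tR M K + 3) = g \<and> keep M K r0 r)"
  define I where "I = (\<lambda>a. J a 0)"
  have inner: "hoare (J a b) (Arith Mul (tR M K) (wR M K a) (wR M K b) \<circ> Arith Div (tR M K) (tR M K) (tR M K + 3)
      \<circ> Arith Sub (qR M K a b) (qR M K a b) (tR M K)) (1 + 1 + 1) (J a (Suc b))" if a: "a < K" and b: "b < K" for a b
  proof -
    have qlt: "\<And>a b. a < K \<Longrightarrow> b < K \<Longrightarrow> qR M K a b < M * K + K * K" unfolding qR_def using ab_lt by fastforce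
    have qge: "\<And>a b. M * K \<le> qR M K a b" unfolding qR_def by simp
    have qinj: "qR M K a' b' = qR M K a b \<longleftrightarrow> a' = a \<and> b' = b" if "a' < K" "b' < K" for a' b'
      unfolding qR_def using ab_inj[of b' K b a' a] b that by auto
    let ?J1 = "\<lambda>r. J a b r \<and> r (tR M K) = w a * w b"
    let ?J2 = "\<lambda>r. J a b r \<and> r (tR M K) = w a * w b / g"
    have Jt: "J a b (r(tR M K := v))" if "J a b r" for r v
    proof -
      have "\<And>a' b'. a' < K \<Longrightarrow> b' < K \<Longrightarrow> qR M K a' b' \<noteq> tR M K" using qlt unfolding tR_def
        by (metis add_lessD1 less_irrefl_nat)
      moreover have "\<And>c. c < K \<Longrightarrow> wR M K c \<noteq> tR M K" unfolding wR_def tR_def by simp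
      moreover have "tR M K + 3 \<noteq> tR M K" by simp
      moreover have "\<And>x. (x < M * K \<or> tR M K + 4 \<le> x) \<Longrightarrow> x \<noteq> tR M K" unfolding tR_def by auto
      ultimately show ?thesis using that unfolding J_def keep_def by auto
    qed
    have wv: "r (wR M K a) = w a" "r (wR M K b) = w b" "r (tR M K + 3) = g" if "J a b r" for r
      using that a b unfolding J_def by auto
    show ?thesis
    proof (rule hoare_seq[OF hoare_seq])
      show "hoare (J a b) (Arith Mul (tR M K) (wR M K a) (wR M K b)) 1 ?J1"
      proof (rule hoare_arith)
        fix r assume r: "J a b r"
        show "\<exists>v. apply_aop Mul (r (wR M K a)) (r (wR M K b)) = Some v \<and> ?J1 (r(tR M K := v))"
          using Jt[OF r] wv[OF r] by simp
      qed
      show "hoare ?J1 (Arith Div (tR M K) (tR M K) (tR M K + 3)) 1 ?J2"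
      proof (rule hoare_arith)
        fix r assume r: "?J1 r"
        show "\<exists>v. apply_aop Div (r (tR M K)) (r (tR M K + 3)) = Some v \<and> ?J2 (r(tR M K := v))"
          using Jt[of r] wv[of r] r g0 by simp
      qed
      show "hoare ?J2 (Arith Sub (qR M K a b) (qR M K a b) (tR M K)) 1 (J a (Suc b))"
      proof (rule hoare_arith)
        fix r assume r: "?J2 r"
        have rq: "r (qR M K a b) = Q a b" using r a b unfolding J_def by auto
        have "?J2 r" by (rule r)
        show "\<exists>v. apply_aop Sub (r (qR M K a b)) (r (tR M K)) = Some v \<and> J a (Suc b) (r(qR M K a b := v))"
        proof (intro exI conjI)
          show "apply_aop Sub (r (qR M K a b)) (r (tR M K)) = Some (Q a b - w a * w b / g)" using r rq by simp
          show "J a (Suc b) (r(qR M K a b := Q a b - w a * w b / g))"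
            unfolding J_def
          proof (intro conjI allI impI)
            fix a' b' assume a': "a' < K" and b': "b' < K"
            show "(r(qR M K a b := Q a b - w a * w b / g)) (qR M K a' b') = (if a' < a \<or> a' = a \<and> b' < Suc b then Q a' b' - w a' * w b' / g else Q a' b')"
              using r qinj[OF a' b'] a' b' unfolding J_def by auto
          next
            fix c assume c: "c < K"
            have "wR M K c \<noteq> qR M K a b" using qlt[OF a b] unfolding wR_def by simp
            thus "(r(qR M K a b := Q a b - w a * w b / g)) (wR M K c) = w c" using r c unfolding J_def by auto
          next
            have "tR M K + 3 \<noteq> qR M K a b" using qlt[OF a b] unfolding tR_def by simp
            thus "(r(qR M K a b := Q a b - w a * w b / g)) (tR M K + 3) = g" using r unfolding J_def by auto
          next
            show "keep M K r0 (r(qR M K a b := Q a b - w a * w b / g))"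
              using r qlt[OF a b] qge[of a b] unfolding J_def keep_def tR_def by auto
          qed
        qed
      qed
    qed
  qed
  have outer: "hoare (I a) (lp K (\<lambda>b. Arith Mul (tR M K) (wR M K a) (wR M K b) \<circ> Arith Div (tR M K) (tR M K) (tR M K + 3)
      \<circ> Arith Sub (qR M K a b) (qR M K a b) (tR M K))) (K * 3) (I (Suc a))" if a: "a < K" for a
  proof -
    have "hoare (J a 0) (lp K (\<lambda>b. Arith Mul (tR M K) (wR M K a) (wR M K b) \<circ> Arith Div (tR M K) (tR M K) (tR M K + 3)
      \<circ> Arith Sub (qR M K a b) (qR M K a b) (tR M K))) (K * (1 + 1 + 1)) (J a K)"
      by (rule hoare_lp[of K "J a"]) (rule inner[OF a])
    then show ?thesis
      by (rule hoare_conseq[OF hoare_cost]) (auto simp: I_def J_def)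
  qed
  have "hoare (I 0) (updQ M K) (K * (K * 3)) (I K)"
    unfolding updQ_def by (rule hoare_lp) (rule outer)
  then show ?thesis
    by (rule hoare_conseq) (auto simp: I_def J_def Qat_def)
qed



definition inok :: "nat \<Rightarrow> nat \<Rightarrow> (nat \<Rightarrow> nat \<Rightarrow> real) \<Rightarrow> (nat \<Rightarrow> real) \<Rightarrow> bool" where
  "inok M K V r \<longleftrightarrow> (\<forall>j<M. \<forall>b<K. r (inR K j b) = V j b)"

lemma reg_facts:
  shows "a < K \<Longrightarrow> b < K \<Longrightarrow> qR M K a b < M * K + K * K"
    and "M * K \<le> qR M K a b"
    and "wR M K c = M * K + K * K + c"
    and "tR M K = M * K + K * K + K"
    and "j < M \<Longrightarrow> b < K \<Longrightarrow> inR K j b < M * K"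
    and "outR M K i = M * K + K * K + K + 4 + i"
  unfolding qR_def wR_def tR_def inR_def outR_def using ab_lt[of a K b] jb_lt[of j M b K] by auto

lemma keep_trans: "keep M K r0 r1 \<Longrightarrow> keep M K r1 r \<Longrightarrow> keep M K r0 r"
  unfolding keep_def by auto

lemma inok_keep: "inok M K V r0 \<Longrightarrow> keep M K r0 r \<Longrightarrow> inok M K V r"
  unfolding inok_def keep_def using reg_facts(5) by metis


lemma qR_lt: "a < K \<Longrightarrow> b < K \<Longrightarrow> qR M K a b < M * K + K * K"
  using reg_facts(1) .
lemma inR_lt: "j < M \<Longrightarrow> b < K \<Longrightarrow> inR K j b < M * K"
  using reg_facts(5) .

lemma keep_upd: "keep M K r0 r \<Longrightarrow> M * K \<le> d \<Longrightarrow> d < tR M K + 4 \<Longrightarrow> keep M K r0 (r(d := v))"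
  unfolding keep_def by auto

lemma Qat_upd: "Qat M K r Q \<Longrightarrow> M * K + K * K \<le> d \<Longrightarrow> Qat M K (r(d := v)) Q"
  unfolding Qat_def using qR_lt by (metis fun_upd_other not_less)

lemma inok_upd: "inok M K V r \<Longrightarrow> M * K \<le> d \<Longrightarrow> inok M K V (r(d := v))"
  unfolding inok_def using inR_lt by (metis fun_upd_other not_less)

lemma tR_ge: "M * K + K * K \<le> tR M K" and tR_ge2: "M * K \<le> tR M K"
  unfolding tR_def by simp_all

definition ci :: "nat \<Rightarrow> nat" where "ci K = K * (2 * K) + 2 * K + 0 + 1 + K * (K * 3)"

lemma item_spec:
  assumes j: "j < M" and g0: "gden K fr Q (V j) \<noteq> 0" and q0: "Qat M K r0 Q" and i0: "inok M K V r0"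
  shows "hoare (\<lambda>r. r = r0) (item M K fr j) (ci K) (\<lambda>r. Qat M K r (upd K fr Q (V j)) \<and> keep M K r0 r)"
proof -
  define w where "w = (\<lambda>a. \<Sum>b<K. Q a b * V j b)"
  define s where "s = (\<Sum>a<K. V j a * w a)"
  define g where "g = gden K fr Q (V j)"
  have gs: "g = (if fr then 1 else 0) + s" unfolding g_def gden_def s_def w_def ..
  define P1 where "P1 = (\<lambda>r. Qat M K r Q \<and> inok M K V r \<and> (\<forall>c<K. r (wR M K c) = w c) \<and> keep M K r0 r)"
  define P2 where "P2 = (\<lambda>r. P1 r \<and> r (tR M K + 1) = s)"
  define P3 where "P3 = (\<lambda>r. P2 r \<and> r (tR M K + 2) = (if fr then 1 else 0))"
  define P4 where "P4 = (\<lambda>r. Qat M K r Q \<and> (\<forall>c<K. r (wR M K c) = w c) \<and> r (tR M K + 3) = g \<and> keep M K r0 r)"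
  have s1: "hoare (\<lambda>r. r = r0) (matvec (wR M K) (tR M K) (qR M K) (inR K j) K) (K * (2 * K)) P1"
  proof (rule hoare_conseq[OF matvec_spec])
    show "inj_on (wR M K) {..<K}" unfolding inj_on_def wR_def by simp
    show "\<And>a. a < K \<Longrightarrow> wR M K a \<noteq> tR M K" unfolding wR_def tR_def by simp
    show "qR M K a b \<notin> wR M K ` {..<K} \<and> qR M K a b \<noteq> tR M K" if "a < K" "b < K" for a b
      using qR_lt[OF that, of M] by (auto simp: wR_def tR_def)
    show "inR K j b \<notin> wR M K ` {..<K} \<and> inR K j b \<noteq> tR M K" if "b < K" for b
      using inR_lt[OF j that] by (auto simp: wR_def tR_def)
    show "\<And>r. r = r0 \<Longrightarrow> r = r0" by simp
    fix r assume r: "(\<forall>a<K. r (wR M K a) = (\<Sum>b<K. r0 (qR M K a b) * r0 (inR K j b))) \<and>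
         (\<forall>x. x \<notin> wR M K ` {..<K} \<longrightarrow> x \<noteq> tR M K \<longrightarrow> r x = r0 x)"
    have fr: "r x = r0 x" if "x < M * K + K * K \<or> M * K + K * K + K + 4 \<le> x" for x
    proof -
      have "x \<notin> wR M K ` {..<K}" "x \<noteq> tR M K" using that by (auto simp: wR_def tR_def)
      thus ?thesis using r by blast
    qed
    have qq: "Qat M K r Q" unfolding Qat_def
    proof (intro allI impI)
      fix a b assume ab: "a < K" "b < K"
      show "r (qR M K a b) = Q a b" using fr[of "qR M K a b"] qR_lt[OF ab, of M] q0 ab unfolding Qat_def by simp
    qed
    have ii: "inok M K V r" unfolding inok_def
    proof (intro allI impI)
      fix j' b assume jb: "j' < M" "b < K"
      show "r (inR K j' b) = V j' b" using fr[of "inR K j' b"] inR_lt[OF jb] i0 jb unfolding inok_def by simp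
    qed
    have ww: "\<forall>c<K. r (wR M K c) = w c"
    proof (intro allI impI)
      fix c assume c: "c < K"
      have "r (wR M K c) = (\<Sum>b<K. r0 (qR M K c b) * r0 (inR K j b))" using r c by blast
      also have "\<dots> = w c" unfolding w_def using q0 i0 c j unfolding Qat_def inok_def by simp
      finally show "r (wR M K c) = w c" .
    qed
    have kk: "keep M K r0 r" unfolding keep_def
    proof (intro allI impI)
      fix x assume "x < M * K \<or> tR M K + 4 \<le> x"
      thus "r x = r0 x" using fr[of x] by (auto simp: tR_def)
    qed
    show "P1 r" unfolding P1_def using qq ii ww kk by blast
  qed
  have s2: "hoare P1 (dot (tR M K + 1) (tR M K) (inR K j) (wR M K) K) (2 * K) P2"
  proof (rule hoare_ghost)
    fix r1 assume r1: "P1 r1"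
    show "hoare (\<lambda>r. r = r1) (dot (tR M K + 1) (tR M K) (inR K j) (wR M K) K) (2 * K) P2"
    proof (rule hoare_conseq[OF dot_spec])
      show "tR M K + 1 \<noteq> tR M K" by simp
      show "inR K j t \<noteq> tR M K + 1 \<and> inR K j t \<noteq> tR M K \<and> wR M K t \<noteq> tR M K + 1 \<and> wR M K t \<noteq> tR M K"
        if "t < K" for t
        using inR_lt[OF j that] that by (auto simp: wR_def tR_def)
      show "\<And>r. r = r1 \<Longrightarrow> r = r1" by simp
      fix r assume r: "r (tR M K + 1) = (\<Sum>t<K. r1 (inR K j t) * r1 (wR M K t)) \<and> (\<forall>x. x \<noteq> tR M K + 1 \<longrightarrow> x \<noteq> tR M K \<longrightarrow> r x = r1 x)"
      have fr: "r x = r1 x" if "x < M * K + K * K + K \<or> M * K + K * K + K + 4 \<le> x" for x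
        using r that by (auto simp: tR_def)
      have p1: "Qat M K r1 Q" "inok M K V r1" "\<forall>c<K. r1 (wR M K c) = w c" "keep M K r0 r1"
        using r1 unfolding P1_def by auto
      have "P1 r" unfolding P1_def Qat_def inok_def
      proof (intro conjI allI impI)
        fix a b assume ab: "a < K" "b < K"
        show "r (qR M K a b) = Q a b" using fr[of "qR M K a b"] qR_lt[OF ab, of M] p1(1) ab unfolding Qat_def by simp
      next
        fix j' b assume jb: "j' < M" "b < K"
        show "r (inR K j' b) = V j' b" using fr[of "inR K j' b"] inR_lt[OF jb] p1(2) jb unfolding inok_def by simp
      next
        fix c assume c: "c < K"
        show "r (wR M K c) = w c" using fr[of "wR M K c"] p1(3) c by (simp add: wR_def)
      next
        show "keep M K r0 r" unfolding keep_def
        proof (intro allI impI)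
          fix x assume x: "x < M * K \<or> tR M K + 4 \<le> x"
          hence "r x = r1 x" using fr[of x] by (auto simp: tR_def)
          thus "r x = r0 x" using p1(4) x unfolding keep_def by simp
        qed
      qed
      moreover have "r (tR M K + 1) = s"
      proof -
        have "r (tR M K + 1) = (\<Sum>t<K. r1 (inR K j t) * r1 (wR M K t))" using r by blast
        also have "\<dots> = s" unfolding s_def using p1(2,3) j unfolding inok_def by simp
        finally show ?thesis .
      qed
      ultimately show "P2 r" unfolding P2_def by blast
    qed
  qed
  have s3: "hoare P2 (Const (if fr then 1 else 0) (tR M K + 2)) 0 P3"
  proof (rule hoare_const)
    fix r assume r: "P2 r"
    let ?r = "r(tR M K + 2 := of_rat (if fr then 1 else 0))"
    have "Qat M K ?r Q" using r unfolding P2_def P1_def by (intro Qat_upd) (auto simp: tR_def)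
    moreover have "inok M K V ?r" using r unfolding P2_def P1_def by (intro inok_upd) (auto simp: tR_def)
    moreover have "\<forall>c<K. ?r (wR M K c) = w c" using r unfolding P2_def P1_def by (auto simp: wR_def tR_def)
    moreover have "keep M K r0 ?r" using r unfolding P2_def P1_def by (intro keep_upd) (auto simp: tR_def)
    moreover have "?r (tR M K + 1) = s" using r unfolding P2_def by simp
    moreover have "?r (tR M K + 2) = (if fr then 1 else 0)" by simp
    ultimately show "P3 ?r" unfolding P3_def P2_def P1_def by blast
  qed
  have s4: "hoare P3 (Arith Add (tR M K + 3) (tR M K + 2) (tR M K + 1)) 1 P4"
  proof (rule hoare_arith)
    fix r assume r: "P3 r"
    let ?r = "r(tR M K + 3 := g)"
    have "apply_aop Add (r (tR M K + 2)) (r (tR M K + 1)) = Some g" using r unfolding P3_def P2_def gs by simp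
    moreover have "Qat M K ?r Q" using r unfolding P3_def P2_def P1_def by (intro Qat_upd) (auto simp: tR_def)
    moreover have "\<forall>c<K. ?r (wR M K c) = w c" using r unfolding P3_def P2_def P1_def by (auto simp: wR_def tR_def)
    moreover have "keep M K r0 ?r" using r unfolding P3_def P2_def P1_def by (intro keep_upd) (auto simp: tR_def)
    moreover have "?r (tR M K + 3) = g" by simp
    ultimately show "\<exists>v. apply_aop Add (r (tR M K + 2)) (r (tR M K + 1)) = Some v \<and> P4 (r(tR M K + 3 := v))"
      unfolding P4_def by blast
  qed
  have s5: "hoare P4 (updQ M K) (K * (K * 3)) (\<lambda>r. Qat M K r (\<lambda>a b. Q a b - w a * w b / g) \<and> keep M K r0 r)"
    unfolding P4_def by (rule updQ_spec) (use g0 g_def in simp)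
  have all: "hoare (\<lambda>r. r = r0) (item M K fr j) (K * (2 * K) + 2 * K + 0 + 1 + K * (K * 3))
     (\<lambda>r. Qat M K r (\<lambda>a b. Q a b - w a * w b / g) \<and> keep M K r0 r)"
    unfolding item_def by (rule hoare_seq[OF hoare_seq[OF hoare_seq[OF hoare_seq[OF s1 s2] s3] s4] s5])
  have ue: "upd K fr Q (V j) = (\<lambda>a b. Q a b - w a * w b / g)"
    unfolding upd_eq w_def g_def by (intro ext) (simp add: mult.commute)
  show ?thesis unfolding ci_def ue using all .
qed



definition items :: "nat \<Rightarrow> nat \<Rightarrow> bool \<Rightarrow> nat list \<Rightarrow> frag" where
  "items M K fr xs = lp (length xs) (\<lambda>t. item M K fr (xs ! t))"

lemma items_spec:
  assumes xm: "\<And>t. t < length xs \<Longrightarrow> xs ! t < M"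
    and gz: "\<And>t. t < length xs \<Longrightarrow> gden K fr (fold_upd K V fr Q (take t xs)) (V (xs ! t)) \<noteq> 0"
    and i0: "inok M K V r0"
  shows "hoare (\<lambda>r. Qat M K r Q \<and> keep M K r0 r) (items M K fr xs) (length xs * ci K)
           (\<lambda>r. Qat M K r (fold_upd K V fr Q xs) \<and> keep M K r0 r)"
proof -
  define I where "I = (\<lambda>t r. Qat M K r (fold_upd K V fr Q (take t xs)) \<and> keep M K r0 r)"
  have "hoare (I 0) (items M K fr xs) (length xs * ci K) (I (length xs))"
    unfolding items_def
  proof (rule hoare_lp)
    fix t assume t: "t < length xs"
    show "hoare (I t) (item M K fr (xs ! t)) (ci K) (I (Suc t))"
    proof (rule hoare_ghost)
      fix r1 assume r1: "I t r1"
      have q1: "Qat M K r1 (fold_upd K V fr Q (take t xs))" and k1: "keep M K r0 r1" using r1 unfolding I_def by auto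
      have "hoare (\<lambda>r. r = r1) (item M K fr (xs ! t)) (ci K)
          (\<lambda>r. Qat M K r (upd K fr (fold_upd K V fr Q (take t xs)) (V (xs ! t))) \<and> keep M K r1 r)"
        by (rule item_spec[OF xm[OF t] gz[OF t] q1 inok_keep[OF i0 k1]])
      then show "hoare (\<lambda>r. r = r1) (item M K fr (xs ! t)) (ci K) (I (Suc t))"
        by (rule hoare_conseq) (auto simp: I_def fold_upd_snoc[OF t] intro: keep_trans[OF k1])
    qed
  qed
  then show ?thesis by (rule hoare_conseq) (auto simp: I_def fold_upd_def)
qed

definition outf :: "nat \<Rightarrow> nat \<Rightarrow> nat \<Rightarrow> frag" where
  "outf M K i = matvec (wR M K) (tR M K) (qR M K) (inR K i) K \<circ> dot (outR M K i) (tR M K) (inR K i) (wR M K) K"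

lemma bform_diag: "bform K Q x x = (\<Sum>a<K. x a * (\<Sum>b<K. Q a b * x b))"
  unfolding bform_def by (simp add: sum_distrib_left mult.assoc)

lemma outf_spec:
  assumes i: "i < M" and q0: "Qat M K r0 Q" and i0: "inok M K V r0"
  shows "hoare (\<lambda>r. r = r0) (outf M K i) (K * (2 * K) + 2 * K)
     (\<lambda>r. r (outR M K i) = bform K Q (V i) (V i) \<and> (\<forall>x. x \<noteq> outR M K i \<longrightarrow> (x < M * K + K * K \<or> tR M K + 1 \<le> x) \<longrightarrow> r x = r0 x))"
proof -
  define w where "w = (\<lambda>a. \<Sum>b<K. Q a b * V i b)"
  define P1 where "P1 = (\<lambda>r. (\<forall>c<K. r (wR M K c) = w c) \<and> (\<forall>x. (x < M * K + K * K \<or> tR M K + 1 \<le> x) \<longrightarrow> r x = r0 x))"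
  have s1: "hoare (\<lambda>r. r = r0) (matvec (wR M K) (tR M K) (qR M K) (inR K i) K) (K * (2 * K)) P1"
  proof (rule hoare_conseq[OF matvec_spec])
    show "inj_on (wR M K) {..<K}" unfolding inj_on_def wR_def by simp
    show "\<And>a. a < K \<Longrightarrow> wR M K a \<noteq> tR M K" unfolding wR_def tR_def by simp
    show "qR M K a b \<notin> wR M K ` {..<K} \<and> qR M K a b \<noteq> tR M K" if "a < K" "b < K" for a b
      using qR_lt[OF that, of M] by (auto simp: wR_def tR_def)
    show "inR K i b \<notin> wR M K ` {..<K} \<and> inR K i b \<noteq> tR M K" if "b < K" for b
      using inR_lt[OF i that] by (auto simp: wR_def tR_def)
    show "\<And>r. r = r0 \<Longrightarrow> r = r0" by simp
    fix r assume r: "(\<forall>a<K. r (wR M K a) = (\<Sum>b<K. r0 (qR M K a b) * r0 (inR K i b))) \<and>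
         (\<forall>x. x \<notin> wR M K ` {..<K} \<longrightarrow> x \<noteq> tR M K \<longrightarrow> r x = r0 x)"
    have fr: "r x = r0 x" if "x < M * K + K * K \<or> tR M K + 1 \<le> x" for x
    proof -
      have "x \<notin> wR M K ` {..<K}" "x \<noteq> tR M K" using that by (auto simp: wR_def tR_def)
      thus ?thesis using r by blast
    qed
    have ww: "\<forall>c<K. r (wR M K c) = w c"
    proof (intro allI impI)
      fix c assume c: "c < K"
      have "r (wR M K c) = (\<Sum>b<K. r0 (qR M K c b) * r0 (inR K i b))" using r c by blast
      also have "\<dots> = w c" unfolding w_def using q0 i0 c i unfolding Qat_def inok_def by simp
      finally show "r (wR M K c) = w c" .
    qed
    show "P1 r" unfolding P1_def using ww fr by blast
  qed
  have s2: "hoare P1 (dot (outR M K i) (tR M K) (inR K i) (wR M K) K) (2 * K)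
     (\<lambda>r. r (outR M K i) = bform K Q (V i) (V i) \<and> (\<forall>x. x \<noteq> outR M K i \<longrightarrow> (x < M * K + K * K \<or> tR M K + 1 \<le> x) \<longrightarrow> r x = r0 x))"
  proof (rule hoare_ghost)
    fix r1 assume r1: "P1 r1"
    show "hoare (\<lambda>r. r = r1) (dot (outR M K i) (tR M K) (inR K i) (wR M K) K) (2 * K)
      (\<lambda>r. r (outR M K i) = bform K Q (V i) (V i) \<and> (\<forall>x. x \<noteq> outR M K i \<longrightarrow> (x < M * K + K * K \<or> tR M K + 1 \<le> x) \<longrightarrow> r x = r0 x))"
    proof (rule hoare_conseq[OF dot_spec])
      show "outR M K i \<noteq> tR M K" by (simp add: outR_def)
      show "inR K i t \<noteq> outR M K i \<and> inR K i t \<noteq> tR M K \<and> wR M K t \<noteq> outR M K i \<and> wR M K t \<noteq> tR M K"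
        if "t < K" for t
        using inR_lt[OF i that] that by (auto simp: wR_def tR_def outR_def)
      show "\<And>r. r = r1 \<Longrightarrow> r = r1" by simp
      fix r assume r: "r (outR M K i) = (\<Sum>t<K. r1 (inR K i t) * r1 (wR M K t)) \<and> (\<forall>x. x \<noteq> outR M K i \<longrightarrow> x \<noteq> tR M K \<longrightarrow> r x = r1 x)"
      have "r (outR M K i) = (\<Sum>t<K. r1 (inR K i t) * r1 (wR M K t))" using r by blast
      also have "\<dots> = (\<Sum>t<K. V i t * w t)"
      proof (rule sum.cong[OF refl])
        fix t assume t: "t \<in> {..<K}"
        have "r1 (inR K i t) = r0 (inR K i t)" using r1 inR_lt[OF i, of t K] t unfolding P1_def by auto
        moreover have "r1 (wR M K t) = w t" using r1 t unfolding P1_def by auto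
        ultimately show "r1 (inR K i t) * r1 (wR M K t) = V i t * w t" using i0 i t unfolding inok_def by auto
      qed
      also have "\<dots> = bform K Q (V i) (V i)" unfolding bform_diag w_def ..
      finally have o: "r (outR M K i) = bform K Q (V i) (V i)" .
      have f: "\<forall>x. x \<noteq> outR M K i \<longrightarrow> (x < M * K + K * K \<or> tR M K + 1 \<le> x) \<longrightarrow> r x = r0 x"
      proof (intro allI impI)
        fix x assume x: "x \<noteq> outR M K i" "x < M * K + K * K \<or> tR M K + 1 \<le> x"
        hence "x \<noteq> tR M K" by (auto simp: tR_def)
        hence "r x = r1 x" using r x by blast
        thus "r x = r0 x" using r1 x unfolding P1_def by auto
      qed
      show "r (outR M K i) = bform K Q (V i) (V i) \<and> (\<forall>x. x \<noteq> outR M K i \<longrightarrow> (x < M * K + K * K \<or> tR M K + 1 \<le> x) \<longrightarrow> r x = r0 x)"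
        using o f by blast
    qed
  qed
  show ?thesis unfolding outf_def by (rule hoare_seq[OF s1 s2])
qed

definition outs :: "nat \<Rightarrow> nat \<Rightarrow> nat list \<Rightarrow> frag" where
  "outs M K ol = lp (length ol) (\<lambda>t. outf M K (ol ! t))"

lemma outs_spec:
  assumes d: "distinct ol" and om: "\<And>t. t < length ol \<Longrightarrow> ol ! t < M"
  shows "hoare (\<lambda>r. Qat M K r Q \<and> inok M K V r) (outs M K ol) (length ol * (K * (2 * K) + 2 * K))
           (\<lambda>r. \<forall>t<length ol. r (outR M K (ol ! t)) = bform K Q (V (ol ! t)) (V (ol ! t)))"
proof -
  define I where "I = (\<lambda>t r. Qat M K r Q \<and> inok M K V r \<and> (\<forall>t'<t. r (outR M K (ol ! t')) = bform K Q (V (ol ! t')) (V (ol ! t'))))"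
  have "hoare (I 0) (outs M K ol) (length ol * (K * (2 * K) + 2 * K)) (I (length ol))"
    unfolding outs_def
  proof (rule hoare_lp)
    fix t assume t: "t < length ol"
    show "hoare (I t) (outf M K (ol ! t)) (K * (2 * K) + 2 * K) (I (Suc t))"
    proof (rule hoare_ghost)
      fix r1 assume r1: "I t r1"
      have q1: "Qat M K r1 Q" and i1: "inok M K V r1" using r1 unfolding I_def by auto
      show "hoare (\<lambda>r. r = r1) (outf M K (ol ! t)) (K * (2 * K) + 2 * K) (I (Suc t))"
      proof (rule hoare_conseq[OF outf_spec[OF om[OF t] q1 i1]])
        show "\<And>r. r = r1 \<Longrightarrow> r = r1" by simp
        fix r assume r: "r (outR M K (ol ! t)) = bform K Q (V (ol ! t)) (V (ol ! t)) \<and>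
            (\<forall>x. x \<noteq> outR M K (ol ! t) \<longrightarrow> (x < M * K + K * K \<or> tR M K + 1 \<le> x) \<longrightarrow> r x = r1 x)"
        have "Qat M K r Q" unfolding Qat_def
        proof (intro allI impI)
          fix a b assume ab: "a < K" "b < K"
          have "qR M K a b \<noteq> outR M K (ol ! t)" using qR_lt[OF ab, of M] by (auto simp: outR_def tR_def)
          thus "r (qR M K a b) = Q a b" using r qR_lt[OF ab, of M] q1 ab unfolding Qat_def by auto
        qed
        moreover have "inok M K V r" unfolding inok_def
        proof (intro allI impI)
          fix j b assume jb: "j < M" "b < K"
          have "inR K j b \<noteq> outR M K (ol ! t)" using inR_lt[OF jb] by (auto simp: outR_def tR_def)
          thus "r (inR K j b) = V j b" using r inR_lt[OF jb] i1 jb unfolding inok_def by auto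
        qed
        moreover have "\<forall>t'<Suc t. r (outR M K (ol ! t')) = bform K Q (V (ol ! t')) (V (ol ! t'))"
        proof (intro allI impI)
          fix t' assume t': "t' < Suc t"
          show "r (outR M K (ol ! t')) = bform K Q (V (ol ! t')) (V (ol ! t'))"
          proof (cases "t' = t")
            case True then show ?thesis using r by simp
          next
            case False
            hence tt: "t' < t" using t' by simp
            have "ol ! t' \<noteq> ol ! t" using d t tt by (simp add: nth_eq_iff_index_eq)
            hence "outR M K (ol ! t') \<noteq> outR M K (ol ! t)" by (simp add: outR_def)
            moreover have "tR M K + 1 \<le> outR M K (ol ! t')" by (simp add: outR_def)
            ultimately have "r (outR M K (ol ! t')) = r1 (outR M K (ol ! t'))" using r by blast
            thus ?thesis using r1 tt unfolding I_def by auto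
          qed
        qed
        ultimately show "I (Suc t) r" unfolding I_def by blast
      qed
    qed
  qed
  then show ?thesis by (rule hoare_conseq) (auto simp: I_def)
qed

definition initQ :: "nat \<Rightarrow> nat \<Rightarrow> frag" where
  "initQ M K = lp K (\<lambda>a. Const 1 (qR M K a a))"

lemma initQ_spec:
  assumes z: "\<And>a b. a < K \<Longrightarrow> b < K \<Longrightarrow> r0 (qR M K a b) = 0"
  shows "hoare (\<lambda>r. r = r0) (initQ M K) 0 (\<lambda>r. Qat M K r (\<lambda>a b. if a = b then 1 else 0) \<and> keep M K r0 r)"
proof -
  define I where "I = (\<lambda>a r. (\<forall>a'<K. \<forall>b<K. r (qR M K a' b) = (if a' = b \<and> a' < a then 1 else 0)) \<and> keep M K r0 r)"
  have h: "hoare (I 0) (initQ M K) (K * 0) (I K)"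
    unfolding initQ_def
  proof (rule hoare_lp)
    fix a assume a: "a < K"
    show "hoare (I a) (Const 1 (qR M K a a)) 0 (I (Suc a))"
    proof (rule hoare_const)
      fix r assume r: "I a r"
      show "I (Suc a) (r(qR M K a a := of_rat 1))" unfolding I_def
      proof (intro conjI allI impI)
        fix a' b assume ab: "a' < K" "b < K"
        have e: "qR M K a' b = qR M K a a \<longleftrightarrow> a' = a \<and> b = a"
          unfolding qR_def using ab_inj[of b K a a' a] ab a by auto
        show "(r(qR M K a a := of_rat 1)) (qR M K a' b) = (if a' = b \<and> a' < Suc a then 1 else 0)"
          using r ab e unfolding I_def by auto
      next
        have "M * K \<le> qR M K a a" "qR M K a a < tR M K + 4" using qR_lt[OF a a, of M]
          by (auto simp: qR_def tR_def)
        thus "keep M K r0 (r(qR M K a a := of_rat 1))" using r unfolding I_def by (intro keep_upd) auto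
      qed
    qed
  qed
  have I0: "I 0 r0" unfolding I_def keep_def using z by auto
  have h0: "hoare (I 0) (initQ M K) 0 (I K)" using h by simp
  show ?thesis
  proof (rule hoare_conseq[OF h0])
    fix r assume "r = r0" thus "I 0 r" using I0 by simp
  next
    fix r assume "I K r" thus "Qat M K r (\<lambda>a b. if a = b then 1 else 0) \<and> keep M K r0 r"
      unfolding I_def Qat_def by auto
  qed
qed



lemma cost_bound:
  fixes K a b :: nat
  assumes K: "1 \<le> K"
  shows "a * ci K + b * ci K + a * (K * (2 * K) + 2 * K) \<le> 12 * (K^2 * b^2 + a * K^2)"
proof -
  have kk: "K \<le> K^2" "1 \<le> K^2" using K by (simp_all add: power2_eq_square)
  have kk2: "K \<le> K * K" "1 \<le> K * K" using kk by (simp_all add: power2_eq_square)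
  have e1: "ci K = 5 * (K * K) + 2 * K + 1" unfolding ci_def by (simp add: algebra_simps)
  have e2: "K * (2 * K) + 2 * K = 2 * (K * K) + 2 * K" by (simp add: algebra_simps)
  have c1: "ci K \<le> 8 * K^2" unfolding e1 power2_eq_square using kk2 by linarith
  have c2: "K * (2 * K) + 2 * K \<le> 4 * K^2" unfolding e2 power2_eq_square using kk2 by linarith
  have bb: "b \<le> b^2" by (simp add: power2_eq_square le_square)
  have x1: "a * ci K \<le> 8 * (a * K^2)"
  proof -
    have "a * ci K \<le> a * (8 * K^2)" using c1 by (rule mult_le_mono2)
    thus ?thesis by (simp add: algebra_simps)
  qed
  have x2: "b * ci K \<le> 8 * (K^2 * b^2)"
  proof -
    have "b * ci K \<le> b^2 * (8 * K^2)" using c1 bb by (rule mult_le_mono[rotated])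
    thus ?thesis by (simp add: algebra_simps)
  qed
  have x3: "a * (K * (2 * K) + 2 * K) \<le> 4 * (a * K^2)"
  proof -
    have "a * (K * (2 * K) + 2 * K) \<le> a * (4 * K^2)" using c2 by (rule mult_le_mono2)
    thus ?thesis by (simp add: algebra_simps)
  qed
  have "12 * (K^2 * b^2 + a * K^2) = 12 * (K^2 * b^2) + 12 * (a * K^2)" by simp
  thus ?thesis using x1 x2 x3 by linarith
qed

theorem mainTheorem1:
  shows "\<exists>C::real. \<forall>M K A. 1 \<le> M \<longrightarrow> K \<le> M \<longrightarrow> A \<subseteq> {..<M} \<longrightarrow>
    (\<exists>p::prog. \<forall>V::nat \<Rightarrow> nat \<Rightarrow> real.
       0 < dpp_event_prob M (gram K V) (\<lambda>S. A \<subseteq> S) \<longrightarrow>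
       (\<exists>outs c. run p (input_regs M K V) = Some (outs, c) \<and>
          (\<forall>i\<in>{..<M} - A. outs i = cond_marginal M (gram K V) A i) \<and>
          real c \<le> C * (real K ^ 3 + real (card A) ^ 3 + real K ^ 2 * real (card A) ^ 2
                        + real (card ({..<M} - A)) * real K ^ 2)))"
proof (rule exI[of _ 12], intro allI impI)
  fix M K :: nat and A :: "nat set"
  assume M1: "1 \<le> M" and KM: "K \<le> M" and A: "A \<subseteq> {..<M}"
  define Ab where "Ab = {..<M} - A"
  define fl where "fl = sorted_list_of_set Ab"
  define al where "al = sorted_list_of_set A"
  have finA: "finite A" using A finite_subset by blast
  have finAb: "finite Ab" unfolding Ab_def by simp
  have rhs0: "0 \<le> 12 * (real K ^ 3 + real (card A) ^ 3 + real K ^ 2 * real (card A) ^ 2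
                        + real (card ({..<M} - A)) * real K ^ 2)" by simp
  show "\<exists>p::prog. \<forall>V::nat \<Rightarrow> nat \<Rightarrow> real.
       0 < dpp_event_prob M (gram K V) (\<lambda>S. A \<subseteq> S) \<longrightarrow>
       (\<exists>outs c. run p (input_regs M K V) = Some (outs, c) \<and>
          (\<forall>i\<in>{..<M} - A. outs i = cond_marginal M (gram K V) A i) \<and>
          real c \<le> 12 * (real K ^ 3 + real (card A) ^ 3 + real K ^ 2 * real (card A) ^ 2
                        + real (card ({..<M} - A)) * real K ^ 2))"
  proof (cases "K = 0")
    case True
    show ?thesis
    proof (rule exI[of _ "Halt (\<lambda>i. 0)"], intro allI impI)
      fix V :: "nat \<Rightarrow> nat \<Rightarrow> real"
      assume pos: "0 < dpp_event_prob M (gram K V) (\<lambda>S. A \<subseteq> S)"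
      have cm: "\<forall>i\<in>{..<M} - A. cond_marginal M (gram K V) A i = 0"
        using math_main(3)[OF A pos] True by (simp add: bform_def)
      have r: "run (Halt (\<lambda>i. 0)) (input_regs M K V) = Some (\<lambda>i. 0, 0)"
        using True by (simp add: input_regs_def)
      show "\<exists>outs c. run (Halt (\<lambda>i. 0)) (input_regs M K V) = Some (outs, c) \<and>
          (\<forall>i\<in>{..<M} - A. outs i = cond_marginal M (gram K V) A i) \<and>
          real c \<le> 12 * (real K ^ 3 + real (card A) ^ 3 + real K ^ 2 * real (card A) ^ 2
                        + real (card ({..<M} - A)) * real K ^ 2)"
        using r cm rhs0 by auto
    qed
  next
    case False
    hence K1: "1 \<le> K" by simp
    define p where "p = (initQ M K \<circ> items M K True fl \<circ> items M K False al \<circ> outs M K fl) (Halt (outR M K))"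
    show ?thesis
    proof (rule exI[of _ p], intro allI impI)
      fix V :: "nat \<Rightarrow> nat \<Rightarrow> real"
      assume pos: "0 < dpp_event_prob M (gram K V) (\<lambda>S. A \<subseteq> S)"
      define r0 where "r0 = input_regs M K V"
      have i0: "inok M K V r0" unfolding inok_def
      proof (intro allI impI)
        fix j b assume jb: "j < M" "b < K"
        have "(j * K + b) div K = j" "(j * K + b) mod K = b" using jb by simp_all
        thus "r0 (inR K j b) = V j b" using inR_lt[OF jb] unfolding r0_def input_regs_def inR_def by simp
      qed
      have z: "r0 (qR M K a b) = 0" if "a < K" "b < K" for a b
        unfolding r0_def input_regs_def qR_def by simp
      have lfl: "length fl = card Ab" and lal: "length al = card A"
        unfolding fl_def al_def using finA finAb by simp_all
      have sfl: "set fl = Ab" and sal: "set al = A" and dfl: "distinct fl"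
        unfolding fl_def al_def using finA finAb by simp_all
      have flM: "fl ! t < M" if "t < length fl" for t
        using nth_mem[OF that] sfl unfolding Ab_def by auto
      have alM: "al ! t < M" if "t < length al" for t
        using nth_mem[OF that] sal A by auto
      note mm = math_main[OF A pos, folded Ab_def fl_def al_def]
      have H1: "hoare (\<lambda>r. r = r0) (initQ M K) 0 (\<lambda>r. Qat M K r (\<lambda>a b. if a = b then 1 else 0) \<and> keep M K r0 r)"
        by (rule initQ_spec) (rule z)
      have H2: "hoare (\<lambda>r. Qat M K r (\<lambda>a b. if a = b then 1 else 0) \<and> keep M K r0 r) (items M K True fl) (length fl * ci K)
           (\<lambda>r. Qat M K r (Q1 M K V A) \<and> keep M K r0 r)"
        unfolding Q1_def Ab_def[symmetric] fl_def[symmetric]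
        by (rule items_spec[OF flM _ i0]) (use mm(1) lfl in auto)
      have H3: "hoare (\<lambda>r. Qat M K r (Q1 M K V A) \<and> keep M K r0 r) (items M K False al) (length al * ci K)
           (\<lambda>r. Qat M K r (Q2 M K V A) \<and> keep M K r0 r)"
        unfolding Q2_def al_def[symmetric]
        by (rule items_spec[OF alM _ i0]) (use mm(2) lal in auto)
      have H4: "hoare (\<lambda>r. Qat M K r (Q2 M K V A) \<and> keep M K r0 r) (outs M K fl) (length fl * (K * (2 * K) + 2 * K))
           (\<lambda>r. \<forall>t<length fl. r (outR M K (fl ! t)) = bform K (Q2 M K V A) (V (fl ! t)) (V (fl ! t)))"
        by (rule hoare_conseq[OF outs_spec[OF dfl flM]]) (auto intro: inok_keep[OF i0])
      have H: "hoare (\<lambda>r. r = r0) (initQ M K \<circ> items M K True fl \<circ> items M K False al \<circ> outs M K fl)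
          (0 + length fl * ci K + length al * ci K + length fl * (K * (2 * K) + 2 * K))
          (\<lambda>r. \<forall>t<length fl. r (outR M K (fl ! t)) = bform K (Q2 M K V A) (V (fl ! t)) (V (fl ! t)))"
        by (rule hoare_seq[OF hoare_seq[OF hoare_seq[OF H1 H2] H3] H4])
      obtain r' where r': "\<forall>t<length fl. r' (outR M K (fl ! t)) = bform K (Q2 M K V A) (V (fl ! t)) (V (fl ! t))"
        and run: "run p r0 = Some (\<lambda>i. r' (outR M K i), 0 + length fl * ci K + length al * ci K + length fl * (K * (2 * K) + 2 * K))"
        using hoare_run[OF H, of r0 "outR M K"] unfolding p_def by auto
      have outs_ok: "\<forall>i\<in>{..<M} - A. r' (outR M K i) = cond_marginal M (gram K V) A i"
      proof
        fix i assume i: "i \<in> {..<M} - A"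
        then obtain t where t: "t < length fl" "fl ! t = i" using sfl unfolding Ab_def by (metis in_set_conv_nth)
        have "r' (outR M K i) = bform K (Q2 M K V A) (V i) (V i)" using r' t by auto
        also have "\<dots> = cond_marginal M (gram K V) A i" using mm(3) i unfolding Ab_def by auto
        finally show "r' (outR M K i) = cond_marginal M (gram K V) A i" .
      qed
      have cb: "0 + length fl * ci K + length al * ci K + length fl * (K * (2 * K) + 2 * K)
          \<le> 12 * (K^2 * (card A)^2 + card ({..<M} - A) * K^2)"
        using cost_bound[OF K1, of "card Ab" "card A"] lfl lal unfolding Ab_def by simp
      hence "real (0 + length fl * ci K + length al * ci K + length fl * (K * (2 * K) + 2 * K))
          \<le> 12 * (real K ^ 2 * real (card A) ^ 2 + real (card ({..<M} - A)) * real K ^ 2)"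
        by (metis (mono_tags, lifting) of_nat_le_iff of_nat_add of_nat_mult of_nat_power of_nat_numeral)
      also have "\<dots> \<le> 12 * (real K ^ 3 + real (card A) ^ 3 + real K ^ 2 * real (card A) ^ 2
                        + real (card ({..<M} - A)) * real K ^ 2)" by simp
      finally have cost: "real (0 + length fl * ci K + length al * ci K + length fl * (K * (2 * K) + 2 * K))
          \<le> 12 * (real K ^ 3 + real (card A) ^ 3 + real K ^ 2 * real (card A) ^ 2
                        + real (card ({..<M} - A)) * real K ^ 2)" .
      show "\<exists>outs c. run p (input_regs M K V) = Some (outs, c) \<and>
          (\<forall>i\<in>{..<M} - A. outs i = cond_marginal M (gram K V) A i) \<and>
          real c \<le> 12 * (real K ^ 3 + real (card A) ^ 3 + real K ^ 2 * real (card A) ^ 2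
                        + real (card ({..<M} - A)) * real K ^ 2)"
        using run outs_ok cost unfolding r0_def by blast
    qed
  qed
qed


end
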